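(* Let $\Omega\subset\mathbb{R}^N$ be a smooth ($C^2$), strictly convex and bounded domain and let $g\colon\mathbb{R}^N\setminus\Omega\to\mathbb{R}$ be continuous and bounded. Let $\{u_s\}_{s\in(0,1)}$ be a uniformly bounded family such that each $u_s$ is a viscosity subsolution of the nonlocal Dirichlet problem $$\inf_{z\in\mathbb{S}^{N-1}} c(s)\int_{\mathbb{R}}\frac{u(x+tz)-u(x)}{|t|^{1+2s}}\,dt=0 \ \text{ in }\Omega,\qquad u=g\ \text{ in }\mathbb{R}^N\setminus\Omega.$$ Then the upper half-relaxed limit $u^*=\limsup^*_{s\nearrow1}u_s$ is a viscosity subsolution of the local problem $$\inf_{z\in\mathbb{S}^{N-1}}\langle D^2u(x)z,z\rangle=0\ \text{ in }\Omega,\qquad u=g\ \text{ on }\partial\Omega.$$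
   Context: Strictly convex: the open segment between any two points of $\overline\Omega$ lies in $\Omega$. $c(s)=\frac{2^{2s}s\,\Gamma(s+1/2)}{\pi^{1/2}\Gamma(1-s)}$, $\mathbb{S}^{N-1}$ the unit sphere. Nonlocal viscosity subsolution: for $u\colon\overline\Omega\to\mathbb{R}$ let $u^g=u$ in $\Omega$, $u^g=g$ in $\mathbb{R}^N\setminus\overline\Omega$, $u^g=\max\{u,g\}$ on $\partial\Omega$; for $\delta>0$, $\phi\in C^2(\mathbb{R}^N)$, $z\in\mathbb{S}^{N-1}$ let $E_{z,\delta}(u,\phi,x)=c(s)\int_{-\delta}^{\delta}\frac{\phi(x+tz)-\phi(x)}{|t|^{1+2s}}dt+c(s)\int_{\mathbb{R}\setminus(-\delta,\delta)}\frac{u^g(x+tz)-u(x)}{|t|^{1+2s}}dt$ and $E_\delta(u,\phi,x)=-\inf_{z\in\mathbb{S}^{N-1}}E_{z,\delta}(u,\phi,x)$. A bounded upper semicontinuous $u\colon\mathbb{R}^N\to\mathbb{R}$ is a viscosity subsolution of the nonlocal problem if $u\le g$ in $\mathbb{R}^N\setminus\overline\Omega$ and for each $\delta>0$ and $\phi\in C^2(\mathbb{R}^N)$ such that $x_0$ is a maximum point of $u-\phi$ in $B_\delta(x_0)$: $E_\delta(u^g,\phi,x_0)\le0$ if $x_0\in\Omega$, and $\min\{E_\delta(u^g,\phi,x_0),u(x_0)-g(x_0)\}\le0$ if $x_0\in\partial\Omega$. Local viscosity subsolution: $u\colon\overline\Omega\to\mathbb{R}$ with $u\le g$ on $\partial\Omega$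 such that for every $\psi\in C^2$ for which $u-\psi$ has a strict local maximum at some $x\in\Omega$, $\inf_{z\in\mathbb{S}^{N-1}}\langle D^2\psi(x)z,z\rangle\ge0$. Upper half-relaxed limit: $u^*(x)=\sup\{\limsup_{k\to\infty}u_{s_k}(x_k): x_k\to x,\ s_k\nearrow1\}$ (equivalently $\lim_{r\to0}\sup\{u_s(y):|y-x|<r,\ 1-r<s<1\}$). *)

theory Defs
  imports "HOL-Analysis.Analysis"
begin

definition C2_on :: "'a::euclidean_space set \<Rightarrow> ('a \<Rightarrow> real) \<Rightarrow> ('a \<Rightarrow> 'a) \<Rightarrow> ('a \<Rightarrow> 'a \<Rightarrow>\<^sub>L 'a) \<Rightarrow> bool" where
  "C2_on S f f' H \<longleftrightarrow>
     (\<forall>x\<in>S. (f has_derivative (\<lambda>h. f' x \<bullet> h)) (at x) \<and>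
             (f' has_derivative (\<lambda>h. blinfun_apply (H x) h)) (at x)) \<and>
     continuous_on S H"

definition C2_domain :: "'a::euclidean_space set \<Rightarrow> bool" where
  "C2_domain \<Omega> \<longleftrightarrow> open \<Omega> \<and> connected \<Omega> \<and> \<Omega> \<noteq> {} \<and>
     (\<forall>x0\<in>frontier \<Omega>. \<exists>r>0. \<exists>\<rho> \<rho>' H. C2_on (ball x0 r) \<rho> \<rho>' H \<and> \<rho>' x0 \<noteq> 0 \<and>
        \<Omega> \<inter> ball x0 r = {x\<in>ball x0 r. \<rho> x < 0})"

definition strictly_convex :: "'a::euclidean_space set \<Rightarrow> bool" where
  "strictly_convex \<Omega> \<longleftrightarrow> (\<forall>a\<in>closure \<Omega>. \<forall>b\<in>closure \<Omega>. open_segment a b \<subseteq> \<Omega>)"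

definition usc :: "('a::metric_space \<Rightarrow> real) \<Rightarrow> bool" where
  "usc u \<longleftrightarrow> (\<forall>x. \<forall>e>0. \<exists>r>0. \<forall>y. dist y x < r \<longrightarrow> u y < u x + e)"

definition c_frac :: "real \<Rightarrow> real" where
  "c_frac s = (2::real) powr (2 * s) * s * Gamma (s + 1/2) / (sqrt pi * Gamma (1 - s))"

definition ext_g :: "'a::euclidean_space set \<Rightarrow> ('a \<Rightarrow> real) \<Rightarrow> ('a \<Rightarrow> real) \<Rightarrow> 'a \<Rightarrow> real" where
  "ext_g \<Omega> g u y = (if y \<in> \<Omega> then u y else if y \<notin> closure \<Omega> then g y else max (u y) (g y))"

text \<open>E_{z,delta}(u,phi,x). The (principal value) integral over (-delta,delta) of the smooth
  test function is written in its symmetrised, absolutely convergent form.\<close>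
definition E_z :: "real \<Rightarrow> 'a::euclidean_space set \<Rightarrow> ('a \<Rightarrow> real) \<Rightarrow> ('a \<Rightarrow> real) \<Rightarrow> ('a \<Rightarrow> real)
                   \<Rightarrow> 'a \<Rightarrow> real \<Rightarrow> 'a \<Rightarrow> real" where
  "E_z s \<Omega> g u \<phi> x \<delta> z =
     c_frac s * integral {0<..<\<delta>} (\<lambda>t. (\<phi> (x + t *\<^sub>R z) + \<phi> (x - t *\<^sub>R z) - 2 * \<phi> x) / t powr (1 + 2 * s))
   + c_frac s * integral {t. \<delta> \<le> \<bar>t\<bar>} (\<lambda>t. (ext_g \<Omega> g u (x + t *\<^sub>R z) - u x) / \<bar>t\<bar> powr (1 + 2 * s))"

definition E_delta :: "real \<Rightarrow> 'a::euclidean_space set \<Rightarrow> ('a \<Rightarrow> real) \<Rightarrow> ('a \<Rightarrow> real) \<Rightarrow> ('a \<Rightarrow> real)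
                   \<Rightarrow> 'a \<Rightarrow> real \<Rightarrow> real" where
  "E_delta s \<Omega> g u \<phi> x \<delta> = - (INF z\<in>sphere 0 1. E_z s \<Omega> g u \<phi> x \<delta> z)"

definition nonlocal_visc_sub :: "real \<Rightarrow> 'a::euclidean_space set \<Rightarrow> ('a \<Rightarrow> real) \<Rightarrow> ('a \<Rightarrow> real) \<Rightarrow> bool" where
  "nonlocal_visc_sub s \<Omega> g u \<longleftrightarrow>
     bounded (range u) \<and> usc u \<and> (\<forall>x. x \<notin> closure \<Omega> \<longrightarrow> u x \<le> g x) \<and>
     (\<forall>\<delta>>0. \<forall>\<phi> \<phi>' H x0. C2_on UNIV \<phi> \<phi>' H \<longrightarrow>
        (\<forall>y\<in>ball x0 \<delta>. u y - \<phi> y \<le> u x0 - \<phi> x0) \<longrightarrow>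
        (x0 \<in> \<Omega> \<longrightarrow> E_delta s \<Omega> g (ext_g \<Omega> g u) \<phi> x0 \<delta> \<le> 0) \<and>
        (x0 \<in> frontier \<Omega> \<longrightarrow> min (E_delta s \<Omega> g (ext_g \<Omega> g u) \<phi> x0 \<delta>) (u x0 - g x0) \<le> 0))"

definition local_visc_sub :: "'a::euclidean_space set \<Rightarrow> ('a \<Rightarrow> real) \<Rightarrow> ('a \<Rightarrow> real) \<Rightarrow> bool" where
  "local_visc_sub \<Omega> g u \<longleftrightarrow>
     (\<forall>x\<in>frontier \<Omega>. u x \<le> g x) \<and>
     (\<forall>\<psi> \<psi>' H x. C2_on UNIV \<psi> \<psi>' H \<longrightarrow> x \<in> \<Omega> \<longrightarrow>
        (\<exists>r>0. \<forall>y\<in>ball x r \<inter> closure \<Omega>. y \<noteq> x \<longrightarrow> u y - \<psi> y < u x - \<psi> x) \<longrightarrow>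
        (INF z\<in>sphere 0 1. (H x) z \<bullet> z) \<ge> 0)"

text \<open>Upper half-relaxed limit as s increases to 1: lim_{r->0} sup{u_s(y) : |y-x|<r, 1-r<s<1}
  (the sup is decreasing in r, so the limit is the infimum over r > 0).\<close>
definition upper_relaxed_limit :: "(real \<Rightarrow> 'a::euclidean_space \<Rightarrow> real) \<Rightarrow> 'a \<Rightarrow> real" where
  "upper_relaxed_limit u x =
     (INF r\<in>{0<..}. SUP p\<in>{(s, y). dist y x < r \<and> 1 - r < s \<and> 0 < s \<and> s < 1}. u (fst p) (snd p))"

end

theory Submission
  imports Defs "HOL-Analysis.Analysis"
begin


lemma c_frac_pos: assumes "0 < s" "s < 1" shows "c_frac s > 0"
  using assms unfolding c_frac_def
  by (intro divide_pos_pos mult_pos_pos Gamma_real_pos) auto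

lemma near_powr_integral:
  fixes s d :: real
  assumes "0 < s" "s < 1" "0 < d"
  shows "((\<lambda>t. t powr (1 - 2 * s)) has_integral d powr (2 - 2 * s) / (2 - 2 * s)) {0<..<d}"
proof -
  have "((\<lambda>t. t powr (1 - 2 * s)) has_integral d powr ((1-2 * s)+1) / ((1-2 * s)+1)) {0..d}"
    by (rule has_integral_powr_from_0) (use assms in auto)
  moreover have "(1-2 * s)+1 = 2-2 * s" by simp
  ultimately have "((\<lambda>t. t powr (1 - 2 * s)) has_integral d powr (2 - 2 * s) / (2 - 2 * s)) (cbox 0 d)"
    by simp
  then have "((\<lambda>t. t powr (1 - 2 * s)) has_integral d powr (2 - 2 * s) / (2 - 2 * s)) (box 0 d)"
    using has_integral_open_interval[of "\<lambda>t. t powr (1 - 2 * s)" _ 0 d] by blast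
  then show ?thesis by (simp add: box_real)
qed

lemma far_powr_integral:
  fixes s d :: real
  assumes "0 < s" "0 < d"
  shows "((\<lambda>t. \<bar>t\<bar> powr (-(1 + 2 * s))) has_integral d powr (-2 * s) / s) {t. d \<le> \<bar>t\<bar>}"
proof -
  have e: "-(1+2 * s) < -1" using assms by simp
  have "((\<lambda>x. x powr (-(1+2 * s))) has_integral -(d powr (-(1+2 * s)+1)) / (-(1+2 * s)+1)) {d..}"
    by (rule has_integral_powr_to_inf[OF e assms(2)])
  moreover have "-(d powr (-(1+2 * s)+1)) / (-(1+2 * s)+1) = d powr (-2 * s) / (2 * s)"
    using assms by (simp add: field_simps)
  ultimately have R0: "((\<lambda>x. x powr (-(1+2 * s))) has_integral d powr (-2 * s) / (2 * s)) {d..}" by simp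
  have R: "((\<lambda>t. \<bar>t\<bar> powr (-(1 + 2 * s))) has_integral d powr (-2 * s) / (2 * s)) {d..}"
    by (rule has_integral_eq[OF _ R0]) (use assms in auto)
  have Rabs: "(\<lambda>t. \<bar>t\<bar> powr (-(1 + 2 * s))) absolutely_integrable_on {d..}"
    using R by (intro nonnegative_absolutely_integrable_1) (auto simp: has_integral_integrable)
  have "(\<lambda>x. \<bar>- x\<bar> powr (-(1 + 2 * s))) absolutely_integrable_on {d..} \<and>
        integral {d..} (\<lambda>x. \<bar>- x\<bar> powr (-(1 + 2 * s))) = d powr (-2 * s) / (2 * s)"
    using Rabs R by (simp add: integral_unique)
  then have "(\<lambda>t. \<bar>t\<bar> powr (-(1 + 2 * s))) absolutely_integrable_on {..-d} \<and>
        integral {..-d} (\<lambda>t. \<bar>t\<bar> powr (-(1 + 2 * s))) = d powr (-2 * s) / (2 * s)"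
    by (subst (asm) has_absolute_integral_reflect_real[where B="{..-d}"]) auto
  then have L: "((\<lambda>t. \<bar>t\<bar> powr (-(1 + 2 * s))) has_integral d powr (-2 * s) / (2 * s)) {..-d}"
    by (metis absolutely_integrable_on_def has_integral_integral)
  have "((\<lambda>t. \<bar>t\<bar> powr (-(1 + 2 * s))) has_integral d powr (-2 * s) / (2 * s) + d powr (-2 * s) / (2 * s)) ({..-d} \<union> {d..})"
  proof (rule has_integral_Un[OF L R])
    have "{..-d} \<inter> {d..} = {}" using assms by auto
    then show "negligible ({..-d} \<inter> {d..})" by simp
  qed
  moreover have "{..-d} \<union> {d..} = {t. d \<le> \<bar>t\<bar>}" by auto
  moreover have "d powr (-2 * s) / (2 * s) + d powr (-2 * s) / (2 * s) = d powr (-2 * s) / s"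
    using assms by (simp add: field_simps)
  ultimately show ?thesis by simp
qed

lemma far_bound:
  fixes F :: "real \<Rightarrow> real" and s d B :: real
  assumes "0 < s" "0 < d" "\<And>t. \<bar>F t\<bar> \<le> B"
  shows "\<bar>integral {t. d \<le> \<bar>t\<bar>} (\<lambda>t. F t / \<bar>t\<bar> powr (1 + 2 * s))\<bar> \<le> B * (d powr (-2 * s) / s)"
proof -
  have B0: "0 \<le> B" using assms(3)[of 0] by linarith
  have G: "((\<lambda>t. B * \<bar>t\<bar> powr (-(1 + 2 * s))) has_integral B * (d powr (-2 * s) / s)) {t. d \<le> \<bar>t\<bar>}"
    by (rule has_integral_mult_right[OF far_powr_integral[OF assms(1,2)]])
  show ?thesis
  proof (cases "(\<lambda>t. F t / \<bar>t\<bar> powr (1 + 2 * s)) integrable_on {t. d \<le> \<bar>t\<bar>}")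
    case True
    have "norm (integral {t. d \<le> \<bar>t\<bar>} (\<lambda>t. F t / \<bar>t\<bar> powr (1 + 2 * s)))
          \<le> integral {t. d \<le> \<bar>t\<bar>} (\<lambda>t. B * \<bar>t\<bar> powr (-(1 + 2 * s)))"
    proof (rule integral_norm_bound_integral[OF True])
      show "(\<lambda>t. B * \<bar>t\<bar> powr (-(1 + 2 * s))) integrable_on {t. d \<le> \<bar>t\<bar>}"
        using G by (rule has_integral_integrable)
      fix t assume "t \<in> {t. d \<le> \<bar>t\<bar>}"
      have "norm (F t / \<bar>t\<bar> powr (1 + 2 * s)) = \<bar>F t\<bar> * inverse (\<bar>t\<bar> powr (1 + 2 * s))"
        by (simp add: divide_inverse abs_mult)
      also have "\<dots> = \<bar>F t\<bar> * \<bar>t\<bar> powr (-(1 + 2 * s))"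
        by (simp only: powr_minus)
      also have "\<dots> \<le> B * \<bar>t\<bar> powr (-(1 + 2 * s))"
        by (rule mult_right_mono[OF assms(3)]) simp
      finally show "norm (F t / \<bar>t\<bar> powr (1 + 2 * s)) \<le> B * \<bar>t\<bar> powr (-(1 + 2 * s))" .
    qed
    moreover have "integral {t. d \<le> \<bar>t\<bar>} (\<lambda>t. B * \<bar>t\<bar> powr (-(1 + 2 * s))) = B * (d powr (-2 * s) / s)"
      by (rule integral_unique[OF G])
    ultimately show ?thesis by (metis real_norm_def)
  next
    case False
    then show ?thesis using B0 assms by (simp add: not_integrable_integral)
  qed
qed

lemma hd_to_deriv: "(f has_derivative (\<lambda>h. h * c)) F \<Longrightarrow> (f has_real_derivative c) F"
proof -
  assume a: "(f has_derivative (\<lambda>h. h * c)) F"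
  have "(\<lambda>h. h * c) = (*) c" by (auto simp: fun_eq_iff)
  then show ?thesis using a by (simp add: has_field_derivative_def)
qed

lemma C2_line_derivs:
  assumes "C2_on UNIV \<psi> \<psi>' H"
  shows "((\<lambda>\<tau>. \<psi> (y + \<tau> *\<^sub>R w)) has_real_derivative (\<psi>' (y + \<tau> *\<^sub>R w) \<bullet> w)) (at \<tau>)"
    and "((\<lambda>\<tau>. \<psi>' (y + \<tau> *\<^sub>R w) \<bullet> w) has_real_derivative ((H (y + \<tau> *\<^sub>R w)) w \<bullet> w)) (at \<tau>)"
proof -
  have d1: "(\<psi> has_derivative (\<lambda>h. \<psi>' x \<bullet> h)) (at x)"
   and d2: "(\<psi>' has_derivative (\<lambda>h. blinfun_apply (H x) h)) (at x)" for x
    using assms unfolding C2_on_def by auto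
  have l: "((\<lambda>\<tau>. y + \<tau> *\<^sub>R w) has_derivative (\<lambda>h. h *\<^sub>R w)) (at \<tau>)"
    by (auto intro!: derivative_eq_intros)
  have "((\<lambda>\<tau>. \<psi> (y + \<tau> *\<^sub>R w)) has_derivative (\<lambda>h. \<psi>' (y + \<tau> *\<^sub>R w) \<bullet> (h *\<^sub>R w))) (at \<tau>)"
    using has_derivative_compose[OF l d1] by (simp add: o_def)
  then show "((\<lambda>\<tau>. \<psi> (y + \<tau> *\<^sub>R w)) has_real_derivative (\<psi>' (y + \<tau> *\<^sub>R w) \<bullet> w)) (at \<tau>)"
    by (intro hd_to_deriv) simp
  have "((\<lambda>\<tau>. \<psi>' (y + \<tau> *\<^sub>R w)) has_derivative (\<lambda>h. (H (y + \<tau> *\<^sub>R w)) (h *\<^sub>R w))) (at \<tau>)"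
    using has_derivative_compose[OF l d2] by (simp add: o_def)
  then have "((\<lambda>\<tau>. \<psi>' (y + \<tau> *\<^sub>R w) \<bullet> w) has_derivative (\<lambda>h. (H (y + \<tau> *\<^sub>R w)) (h *\<^sub>R w) \<bullet> w)) (at \<tau>)"
    by (auto intro!: derivative_eq_intros)
  then show "((\<lambda>\<tau>. \<psi>' (y + \<tau> *\<^sub>R w) \<bullet> w) has_real_derivative ((H (y + \<tau> *\<^sub>R w)) w \<bullet> w)) (at \<tau>)"
    by (intro hd_to_deriv) (simp add: blinfun.scaleR_right)
qed

lemma C2_taylor1:
  assumes "C2_on UNIV \<psi> \<psi>' H" "0 < t"
  shows "\<exists>\<theta>. 0 < \<theta> \<and> \<theta> < t \<and>
     \<psi> (y + t *\<^sub>R w) = \<psi> y + (\<psi>' y \<bullet> w) * t + ((H (y + \<theta> *\<^sub>R w)) w \<bullet> w) / 2 * t\<^sup>2"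
proof -
  define diff :: "nat \<Rightarrow> real \<Rightarrow> real" where
    "diff = (\<lambda>m \<tau>. if m = 0 then \<psi> (y + \<tau> *\<^sub>R w) else if m = 1 then \<psi>' (y + \<tau> *\<^sub>R w) \<bullet> w
              else (H (y + \<tau> *\<^sub>R w)) w \<bullet> w)"
  have "\<exists>\<theta>::real. 0 < \<theta> \<and> \<theta> < t \<and>
    diff 0 t = (\<Sum>m<2. (diff m 0 / fact m) * (t - 0)^m) + (diff 2 \<theta> / fact 2) * (t - 0)^2"
  proof (rule Taylor_up[where a=0 and c=0 and b=t and f="diff 0"])
    show "\<forall>m \<tau>. m < 2 \<and> 0 \<le> \<tau> \<and> \<tau> \<le> t \<longrightarrow> DERIV (diff m) \<tau> :> diff (Suc m) \<tau>"
    proof (intro allI impI)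
      fix m :: nat and \<tau> :: real assume "m < 2 \<and> 0 \<le> \<tau> \<and> \<tau> \<le> t"
      then have "m = 0 \<or> m = 1" by auto
      then show "DERIV (diff m) \<tau> :> diff (Suc m) \<tau>"
        using C2_line_derivs[OF assms(1), of y w \<tau>] unfolding diff_def
        by (auto simp: fun_eq_iff)
    qed
  qed (use assms in auto)
  then obtain \<theta> where "0 < \<theta>" "\<theta> < t"
    "diff 0 t = (\<Sum>m<2. (diff m 0 / fact m) * (t - 0)^m) + (diff 2 \<theta> / fact 2) * (t - 0)^2" by blast
  then show ?thesis unfolding diff_def
    by (intro exI[of _ \<theta>]) (simp add: numeral_2_eq_2 lessThan_Suc)
qed

lemma C2_second_diff:
  assumes "C2_on UNIV \<psi> \<psi>' H" "0 < t"
  shows "\<exists>\<theta>1 \<theta>2. 0 < \<theta>1 \<and> \<theta>1 < t \<and> 0 < \<theta>2 \<and> \<theta>2 < t \<and>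
     \<psi> (y + t *\<^sub>R z) + \<psi> (y - t *\<^sub>R z) - 2 * \<psi> y =
       t\<^sup>2 / 2 * ((H (y + \<theta>1 *\<^sub>R z)) z \<bullet> z + (H (y + (-\<theta>2) *\<^sub>R z)) z \<bullet> z)"
proof -
  obtain \<theta>1 where 1: "0 < \<theta>1" "\<theta>1 < t"
     "\<psi> (y + t *\<^sub>R z) = \<psi> y + (\<psi>' y \<bullet> z) * t + ((H (y + \<theta>1 *\<^sub>R z)) z \<bullet> z) / 2 * t\<^sup>2"
    using C2_taylor1[OF assms, of y z] by blast
  obtain \<theta>2 where 2: "0 < \<theta>2" "\<theta>2 < t"
     "\<psi> (y + t *\<^sub>R (-z)) = \<psi> y + (\<psi>' y \<bullet> (-z)) * t + ((H (y + \<theta>2 *\<^sub>R (-z))) (-z) \<bullet> (-z)) / 2 * t\<^sup>2"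
    using C2_taylor1[OF assms, of y "-z"] by blast
  have e1: "y + t *\<^sub>R (-z) = y - t *\<^sub>R z" by simp
  have e2: "y + \<theta>2 *\<^sub>R (-z) = y + (-\<theta>2) *\<^sub>R z" by simp
  have e3: "(H (y + (-\<theta>2) *\<^sub>R z)) (-z) \<bullet> (-z) = (H (y + (-\<theta>2) *\<^sub>R z)) z \<bullet> z"
    by (simp add: blinfun.minus_right)
  show ?thesis
    using 1 2 unfolding e1 e2 e3
    by (intro exI[of _ \<theta>1] exI[of _ \<theta>2]) (simp add: algebra_simps)
qed

lemma C2_continuous:
  assumes "C2_on UNIV \<psi> \<psi>' H"
  shows "continuous_on UNIV \<psi>"
proof -
  have "(\<psi> has_derivative (\<lambda>h. \<psi>' x \<bullet> h)) (at x)" for x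
    using assms unfolding C2_on_def by auto
  then show ?thesis
    by (meson continuous_at_imp_continuous_on has_derivative_continuous)
qed

lemma near_part:
  fixes s \<delta> L U :: real
  assumes C2: "C2_on UNIV \<psi> \<psi>' H" and s: "0 < s" "s < 1" and d: "0 < \<delta>"
    and bnd: "\<And>\<theta>. \<bar>\<theta>\<bar> < \<delta> \<Longrightarrow> L \<le> (H (x + \<theta> *\<^sub>R z)) z \<bullet> z \<and> (H (x + \<theta> *\<^sub>R z)) z \<bullet> z \<le> U"
  shows "(\<lambda>t. (\<psi> (x + t *\<^sub>R z) + \<psi> (x - t *\<^sub>R z) - 2 * \<psi> x) / t powr (1 + 2 * s)) integrable_on {0<..<\<delta>}"
    and "integral {0<..<\<delta>} (\<lambda>t. (\<psi> (x + t *\<^sub>R z) + \<psi> (x - t *\<^sub>R z) - 2 * \<psi> x) / t powr (1 + 2 * s))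
           \<le> U * (\<delta> powr (2 - 2 * s) / (2 - 2 * s))"
    and "L * (\<delta> powr (2 - 2 * s) / (2 - 2 * s)) \<le>
         integral {0<..<\<delta>} (\<lambda>t. (\<psi> (x + t *\<^sub>R z) + \<psi> (x - t *\<^sub>R z) - 2 * \<psi> x) / t powr (1 + 2 * s))"
proof -
  define f where "f = (\<lambda>t. (\<psi> (x + t *\<^sub>R z) + \<psi> (x - t *\<^sub>R z) - 2 * \<psi> x) / t powr (1 + 2 * s))"
  have P: "((\<lambda>t. t powr (1 - 2 * s)) has_integral \<delta> powr (2 - 2 * s) / (2 - 2 * s)) {0<..<\<delta>}"
    by (rule near_powr_integral[OF s d])
  have pt: "L * t powr (1 - 2 * s) \<le> f t \<and> f t \<le> U * t powr (1 - 2 * s)" if t: "t \<in> {0<..<\<delta>}" for t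
  proof -
    from t have t0: "0 < t" "t < \<delta>" by auto
    obtain \<theta>1 \<theta>2 where th: "0 < \<theta>1" "\<theta>1 < t" "0 < \<theta>2" "\<theta>2 < t"
      "\<psi> (x + t *\<^sub>R z) + \<psi> (x - t *\<^sub>R z) - 2 * \<psi> x =
       t\<^sup>2 / 2 * ((H (x + \<theta>1 *\<^sub>R z)) z \<bullet> z + (H (x + (-\<theta>2) *\<^sub>R z)) z \<bullet> z)"
      using C2_second_diff[OF C2 t0(1), of x z] by blast
    have b1: "L \<le> (H (x + \<theta>1 *\<^sub>R z)) z \<bullet> z \<and> (H (x + \<theta>1 *\<^sub>R z)) z \<bullet> z \<le> U"
      using bnd[of \<theta>1] th t0 by auto
    have b2: "L \<le> (H (x + (-\<theta>2) *\<^sub>R z)) z \<bullet> z \<and> (H (x + (-\<theta>2) *\<^sub>R z)) z \<bullet> z \<le> U"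
      using bnd[of "-\<theta>2"] th t0 by auto
    have q: "t\<^sup>2 / t powr (1 + 2 * s) = t powr (1 - 2 * s)"
    proof -
      have "t powr (1 - 2 * s) = t powr (2 - (1 + 2 * s))" by (simp add: algebra_simps)
      also have "\<dots> = t powr 2 / t powr (1 + 2 * s)" by (rule powr_diff)
      also have "t powr 2 = t\<^sup>2" using t0 by (simp only: powr_numeral less_imp_le)
      finally show ?thesis by simp
    qed
    have ff: "f t = ((H (x + \<theta>1 *\<^sub>R z)) z \<bullet> z + (H (x + (-\<theta>2) *\<^sub>R z)) z \<bullet> z) / 2 * t powr (1 - 2 * s)"
      unfolding f_def th(5) q[symmetric] by simp
    have pos: "0 \<le> t powr (1 - 2 * s)" by simp
    define m where "m = ((H (x + \<theta>1 *\<^sub>R z)) z \<bullet> z + (H (x + (-\<theta>2) *\<^sub>R z)) z \<bullet> z) / 2"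
    have "L \<le> m" "m \<le> U" using b1 b2 unfolding m_def by auto
    then have "L * t powr (1 - 2 * s) \<le> m * t powr (1 - 2 * s)" "m * t powr (1 - 2 * s) \<le> U * t powr (1 - 2 * s)"
      using pos by (auto intro: mult_right_mono)
    then show ?thesis unfolding ff m_def[symmetric] by simp
  qed
  have c1: "continuous_on {0<..<\<delta>} (\<lambda>t. \<psi> (x + t *\<^sub>R z))"
    by (rule continuous_on_compose2[OF C2_continuous[OF C2]]) (auto intro!: continuous_intros)
  have c2: "continuous_on {0<..<\<delta>} (\<lambda>t. \<psi> (x - t *\<^sub>R z))"
    by (rule continuous_on_compose2[OF C2_continuous[OF C2]]) (auto intro!: continuous_intros)
  have cont: "continuous_on {0<..<\<delta>} f"
    unfolding f_def using c1 c2
    by (auto intro!: continuous_intros)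
  have meas: "f \<in> borel_measurable (lebesgue_on {0<..<\<delta>})"
    by (rule continuous_imp_measurable_on_sets_lebesgue[OF cont]) simp
  have Pi: "(\<lambda>t. (\<bar>L\<bar> + \<bar>U\<bar>) * t powr (1 - 2 * s)) integrable_on {0<..<\<delta>}"
    using has_integral_mult_right[OF P] by (rule has_integral_integrable)
  have "f absolutely_integrable_on {0<..<\<delta>}"
  proof (rule measurable_bounded_by_integrable_imp_absolutely_integrable[OF meas _ Pi])
    fix t assume t: "t \<in> {0<..<\<delta>}"
    have "0 \<le> t powr (1 - 2 * s)" by simp
    then have "(-L) * t powr (1 - 2 * s) \<le> \<bar>L\<bar> * t powr (1 - 2 * s)" "U * t powr (1 - 2 * s) \<le> \<bar>U\<bar> * t powr (1 - 2 * s)"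
      "0 \<le> \<bar>L\<bar> * t powr (1 - 2 * s)" "0 \<le> \<bar>U\<bar> * t powr (1 - 2 * s)"
      by (intro mult_right_mono mult_nonneg_nonneg; simp)+
    then show "norm (f t) \<le> (\<bar>L\<bar> + \<bar>U\<bar>) * t powr (1 - 2 * s)"
      using pt[OF t] unfolding real_norm_def distrib_right abs_le_iff by linarith
  qed simp
  then have fi: "f integrable_on {0<..<\<delta>}" using absolutely_integrable_on_def by blast
  then show "(\<lambda>t. (\<psi> (x + t *\<^sub>R z) + \<psi> (x - t *\<^sub>R z) - 2 * \<psi> x) / t powr (1 + 2 * s)) integrable_on {0<..<\<delta>}"
    unfolding f_def .
  have "integral {0<..<\<delta>} f \<le> integral {0<..<\<delta>} (\<lambda>t. U * t powr (1 - 2 * s))"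
    by (rule integral_le[OF fi]) (use pt has_integral_mult_right[OF P] in \<open>auto intro: has_integral_integrable\<close>)
  also have "\<dots> = U * (\<delta> powr (2 - 2 * s) / (2 - 2 * s))"
    using has_integral_mult_right[OF P] by (rule integral_unique)
  finally show "integral {0<..<\<delta>} (\<lambda>t. (\<psi> (x + t *\<^sub>R z) + \<psi> (x - t *\<^sub>R z) - 2 * \<psi> x) / t powr (1 + 2 * s))
           \<le> U * (\<delta> powr (2 - 2 * s) / (2 - 2 * s))" unfolding f_def .
  have "L * (\<delta> powr (2 - 2 * s) / (2 - 2 * s)) = integral {0<..<\<delta>} (\<lambda>t. L * t powr (1 - 2 * s))"
    using has_integral_mult_right[OF P] by (rule integral_unique[symmetric])
  also have "\<dots> \<le> integral {0<..<\<delta>} f"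
    by (rule integral_le[OF _ fi]) (use pt has_integral_mult_right[OF P] in \<open>auto intro: has_integral_integrable\<close>)
  finally show "L * (\<delta> powr (2 - 2 * s) / (2 - 2 * s)) \<le>
         integral {0<..<\<delta>} (\<lambda>t. (\<psi> (x + t *\<^sub>R z) + \<psi> (x - t *\<^sub>R z) - 2 * \<psi> x) / t powr (1 + 2 * s))"
    unfolding f_def .
qed



lemma ext_g_bound:
  assumes "\<And>y. \<bar>v y\<bar> \<le> B" "\<And>y. y \<notin> \<Omega> \<Longrightarrow> \<bar>g y\<bar> \<le> B"
  shows "\<bar>ext_g \<Omega> g v y\<bar> \<le> B"
  using assms[of y] unfolding ext_g_def by auto

lemma hess_quad_bound:
  assumes "norm z = 1"
  shows "\<bar>(blinfun_apply A z) \<bullet> z\<bar> \<le> norm A"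
proof -
  have "\<bar>(blinfun_apply A z) \<bullet> z\<bar> \<le> norm (blinfun_apply A z) * norm z"
    by (rule Cauchy_Schwarz_ineq2)
  also have "\<dots> \<le> norm A * norm z * norm z"
    by (rule mult_right_mono[OF norm_blinfun]) simp
  finally show ?thesis using assms by simp
qed

lemma E_z_bounds:
  fixes s \<delta> L U B2 :: real
  assumes C2: "C2_on UNIV \<phi> \<phi>' H" and s: "0 < s" "s < 1" and d: "0 < \<delta>"
    and bnd: "\<And>\<theta>. \<bar>\<theta>\<bar> < \<delta> \<Longrightarrow> L \<le> (H (x + \<theta> *\<^sub>R z)) z \<bullet> z \<and> (H (x + \<theta> *\<^sub>R z)) z \<bullet> z \<le> U"
    and far: "\<And>w. \<bar>ext_g \<Omega> g v w - v x\<bar> \<le> B2"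
  shows "E_z s \<Omega> g v \<phi> x \<delta> z \<le> c_frac s * (U * (\<delta> powr (2 - 2 * s) / (2 - 2 * s)) + B2 * (\<delta> powr (-2 * s) / s))"
    and "c_frac s * (L * (\<delta> powr (2 - 2 * s) / (2 - 2 * s)) - B2 * (\<delta> powr (-2 * s) / s)) \<le> E_z s \<Omega> g v \<phi> x \<delta> z"
proof -
  note N = near_part[OF C2 s d bnd]
  have F: "\<bar>integral {t. \<delta> \<le> \<bar>t\<bar>} (\<lambda>t. (ext_g \<Omega> g v (x + t *\<^sub>R z) - v x) / \<bar>t\<bar> powr (1 + 2 * s))\<bar>
     \<le> B2 * (\<delta> powr (-2 * s) / s)"
    by (rule far_bound[OF s(1) d]) (rule far)
  have c: "c_frac s > 0" by (rule c_frac_pos[OF s])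
  show "E_z s \<Omega> g v \<phi> x \<delta> z \<le> c_frac s * (U * (\<delta> powr (2 - 2 * s) / (2 - 2 * s)) + B2 * (\<delta> powr (-2 * s) / s))"
    unfolding E_z_def distrib_left[symmetric]
    by (rule mult_left_mono) (use N(2) F c in auto)
  show "c_frac s * (L * (\<delta> powr (2 - 2 * s) / (2 - 2 * s)) - B2 * (\<delta> powr (-2 * s) / s)) \<le> E_z s \<Omega> g v \<phi> x \<delta> z"
    unfolding E_z_def distrib_left[symmetric]
    by (rule mult_left_mono) (use N(3) F c in auto)
qed

lemma C2_hess_bound:
  assumes C2: "C2_on UNIV \<phi> \<phi>' H"
  shows "\<exists>C. \<forall>w\<in>cball x r. norm (H w) \<le> C"
proof -
  have "continuous_on UNIV H" using C2 unfolding C2_on_def by auto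
  then have "compact (H ` cball x r)"
    by (intro compact_continuous_image) (auto intro: continuous_on_subset)
  then obtain C where "\<forall>y\<in>H ` cball x r. norm y \<le> C"
    using compact_imp_bounded bounded_iff by metis
  then show ?thesis by auto
qed

lemma E_bdd_below:
  fixes s \<delta> B2 :: real
  assumes C2: "C2_on UNIV \<phi> \<phi>' H" and s: "0 < s" "s < 1" and d: "0 < \<delta>"
    and far: "\<And>w. \<bar>ext_g \<Omega> g v w - v x\<bar> \<le> B2"
  shows "bdd_below ((\<lambda>z. E_z s \<Omega> g v \<phi> x \<delta> z) ` sphere 0 1)"
proof -
  obtain C where C: "\<forall>w\<in>cball x \<delta>. norm (H w) \<le> C" using C2_hess_bound[OF C2] by blast
  show ?thesis
  proof (rule bdd_belowI2)
    fix z :: 'a assume z: "z \<in> sphere 0 1"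
    have bnd: "-C \<le> (H (x + \<theta> *\<^sub>R z)) z \<bullet> z \<and> (H (x + \<theta> *\<^sub>R z)) z \<bullet> z \<le> C" if "\<bar>\<theta>\<bar> < \<delta>" for \<theta>
    proof -
      have "x + \<theta> *\<^sub>R z \<in> cball x \<delta>" using z that by (auto simp: dist_norm)
      then have "norm (H (x + \<theta> *\<^sub>R z)) \<le> C" using C by blast
      moreover have "\<bar>(H (x + \<theta> *\<^sub>R z)) z \<bullet> z\<bar> \<le> norm (H (x + \<theta> *\<^sub>R z))"
        by (rule hess_quad_bound) (use z in simp)
      ultimately show ?thesis by linarith
    qed
    show "c_frac s * (-C * (\<delta> powr (2 - 2 * s) / (2 - 2 * s)) - B2 * (\<delta> powr (-2 * s) / s)) \<le> E_z s \<Omega> g v \<phi> x \<delta> z"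
      by (rule E_z_bounds(2)[OF C2 s d bnd far])
  qed
qed



definition Sset :: "real \<Rightarrow> 'a::euclidean_space \<Rightarrow> (real \<times> 'a) set" where
  "Sset r x = {(s, y). dist y x < r \<and> 1 - r < s \<and> 0 < s \<and> s < 1}"

definition SUPr :: "(real \<Rightarrow> 'a::euclidean_space \<Rightarrow> real) \<Rightarrow> real \<Rightarrow> 'a \<Rightarrow> real" where
  "SUPr u r x = (SUP p\<in>Sset r x. u (fst p) (snd p))"

lemma url_eq: "upper_relaxed_limit u x = (INF r\<in>{0<..}. SUPr u r x)"
  unfolding upper_relaxed_limit_def SUPr_def Sset_def by simp

lemma Sset_ne: "0 < r \<Longrightarrow> Sset r x \<noteq> {}"
proof -
  assume r: "0 < r"
  have "(max (1/2) (1 - r/2), x) \<in> Sset r x" using r unfolding Sset_def by auto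
  then show ?thesis by blast
qed

context
  fixes u :: "real \<Rightarrow> 'a::euclidean_space \<Rightarrow> real" and M :: real
  assumes M: "\<forall>s\<in>{0<..<1}. \<forall>x. \<bar>u s x\<bar> \<le> M"
begin

lemma Sset_bdd: "bdd_above ((\<lambda>p. u (fst p) (snd p)) ` Sset r x)"
  using M unfolding Sset_def by (intro bdd_aboveI2[of _ _ M]) (auto simp: abs_le_iff)

lemma SUPr_upper: "p \<in> Sset r x \<Longrightarrow> u (fst p) (snd p) \<le> SUPr u r x"
  unfolding SUPr_def by (rule cSUP_upper[OF _ Sset_bdd])

lemma SUPr_ge: "0 < r \<Longrightarrow> -M \<le> SUPr u r x"
proof -
  assume r: "0 < r"
  obtain p where p: "p \<in> Sset r x" using Sset_ne[OF r] by blast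
  obtain a b where ab: "p = (a, b)" by (cases p)
  then have "a \<in> {0<..<1}" using p unfolding Sset_def by auto
  then have "\<bar>u a b\<bar> \<le> M" using M by blast
  then have "-M \<le> u (fst p) (snd p)" using ab by auto
  also have "\<dots> \<le> SUPr u r x" by (rule SUPr_upper[OF p])
  finally show ?thesis .
qed

lemma SUPr_bdd: "bdd_below ((\<lambda>r. SUPr u r x) ` {0<..})"
  by (intro bdd_belowI2[of _ "-M"]) (auto intro: SUPr_ge)

lemma url_le_SUPr: "0 < r \<Longrightarrow> upper_relaxed_limit u x \<le> SUPr u r x"
  unfolding url_eq by (rule cINF_lower[OF SUPr_bdd]) simp

lemma url_approx:
  assumes "0 < r" "0 < e"
  shows "\<exists>s y. dist y x < r \<and> 1 - r < s \<and> 0 < s \<and> s < 1 \<and> upper_relaxed_limit u x - e < u s y"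
proof -
  have "upper_relaxed_limit u x - e < SUPr u r x" using url_le_SUPr[OF assms(1), where x=x] assms(2) by linarith
  then obtain p where "p \<in> Sset r x" "upper_relaxed_limit u x - e < u (fst p) (snd p)"
    unfolding SUPr_def using less_cSUP_iff[OF Sset_ne[OF assms(1)] Sset_bdd] by blast
  then show ?thesis unfolding Sset_def by (cases p) auto
qed

lemma url_le:
  assumes "0 < r" "\<And>s y. dist y x < r \<Longrightarrow> 1 - r < s \<Longrightarrow> 0 < s \<Longrightarrow> s < 1 \<Longrightarrow> u s y \<le> c"
  shows "upper_relaxed_limit u x \<le> c"
proof -
  have "SUPr u r x \<le> c" unfolding SUPr_def
    by (rule cSUP_least[OF Sset_ne[OF assms(1)]]) (use assms(2) in \<open>auto simp: Sset_def\<close>)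
  then show ?thesis using url_le_SUPr[OF assms(1), where x=x] by linarith
qed

lemma url_ge:
  assumes "\<And>r. 0 < r \<Longrightarrow> c \<le> SUPr u r x"
  shows "c \<le> upper_relaxed_limit u x"
  unfolding url_eq by (rule cINF_greatest) (use assms in auto)

end

lemma usc_diff_cont:
  assumes "usc f" "continuous_on UNIV \<psi>"
  shows "usc (\<lambda>x. f x - \<psi> x)"
  unfolding usc_def
proof (intro allI impI)
  fix x :: 'a and e :: real assume e: "0 < e"
  obtain r1 where r1: "r1 > 0" "\<forall>y. dist y x < r1 \<longrightarrow> f y < f x + e/2"
    using assms(1) e unfolding usc_def by (meson half_gt_zero)
  have "continuous (at x) \<psi>" using assms(2) by (simp add: continuous_on_eq_continuous_at)
  then obtain r2 where r2: "r2 > 0" "\<forall>y. dist y x < r2 \<longrightarrow> dist (\<psi> y) (\<psi> x) < e/2"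
    using e unfolding continuous_at_eps_delta by (meson half_gt_zero)
  show "\<exists>r>0. \<forall>y. dist y x < r \<longrightarrow> f y - \<psi> y < f x - \<psi> x + e"
  proof (intro exI[of _ "min r1 r2"] conjI allI impI)
    fix y assume "dist y x < min r1 r2"
    then have "f y < f x + e/2" "dist (\<psi> y) (\<psi> x) < e/2" using r1 r2 by auto
    then show "f y - \<psi> y < f x - \<psi> x + e" unfolding dist_real_def abs_less_iff by linarith
  qed (use r1 r2 in auto)
qed

lemma usc_argmax:
  fixes f :: "'a::metric_space \<Rightarrow> real"
  assumes "usc f" "compact K" "K \<noteq> {}" "\<And>x. x \<in> K \<Longrightarrow> f x \<le> Mf"
  shows "\<exists>x\<in>K. \<forall>y\<in>K. f y \<le> f x"
proof (rule ccontr)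
  assume na: "\<not> ?thesis"
  define S where "S = (SUP x\<in>K. f x)"
  have bdd: "bdd_above (f ` K)" using assms(4) by (intro bdd_aboveI2) auto
  have fS: "f x < S" if "x \<in> K" for x
  proof -
    have "f x \<le> S" unfolding S_def by (rule cSUP_upper[OF that bdd])
    moreover have "f x \<noteq> S"
    proof
      assume "f x = S"
      then have "\<forall>y\<in>K. f y \<le> f x" unfolding S_def using bdd by (simp add: cSUP_upper)
      then show False using na that by blast
    qed
    ultimately show ?thesis by simp
  qed
  have "\<exists>r>0. \<forall>y. dist y x < r \<longrightarrow> f y < f x + (S - f x)/2" if "x \<in> K" for x
    using assms(1) fS[OF that] unfolding usc_def by simp
  then obtain rr where rr: "\<And>x. x \<in> K \<Longrightarrow> rr x > 0 \<and> (\<forall>y. dist y x < rr x \<longrightarrow> f y < f x + (S - f x)/2)"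
    by metis
  have "K \<subseteq> (\<Union>x\<in>K. ball x (rr x))" using rr by (auto simp: dist_commute)
  then obtain C' where C': "C' \<subseteq> K" "finite C'" "K \<subseteq> (\<Union>x\<in>C'. ball x (rr x))"
    using compactE_image[OF assms(2), of K "\<lambda>x. ball x (rr x)"] by blast
  then have C'ne: "C' \<noteq> {}" using assms(3) by auto
  define S' where "S' = Max ((\<lambda>x. f x + (S - f x)/2) ` C')"
  have "S' \<in> (\<lambda>x. f x + (S - f x)/2) ` C'" unfolding S'_def using C' C'ne by (intro Max_in) auto
  then obtain x0 where x0: "x0 \<in> C'" "S' = f x0 + (S - f x0)/2" by blast
  have "x0 \<in> K" using C'(1) x0(1) by blast
  then have "f x0 < S" by (rule fS)
  then have S'S: "S' < S" using x0(2) by (simp add: field_simps)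
  have "f y \<le> S'" if yK: "y \<in> K" for y
  proof -
    obtain x where x: "x \<in> C'" "y \<in> ball x (rr x)" using C'(3) yK by blast
    then have "f y < f x + (S - f x)/2" using rr[of x] C'(1) by (auto simp: dist_commute)
    also have "\<dots> \<le> S'" unfolding S'_def using C' x by (intro Max_ge) auto
    finally show ?thesis by simp
  qed
  then have "S \<le> S'" unfolding S_def by (intro cSUP_least[OF assms(3)]) auto
  then show False using S'S by simp
qed



lemma bracket_neg:
  fixes \<eta> \<delta> B s :: real
  assumes "0 < \<eta>" "0 < \<delta>" "0 \<le> B" "max (1/2) (1 - \<eta> * \<delta>\<^sup>2 / (8 * B + 1)) < s" "s < 1"
  shows "-\<eta> * (\<delta> powr (2 - 2 * s) / (2 - 2 * s)) + 2 * B * (\<delta> powr (-2 * s) / s) < 0"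
proof -
  define q where "q = \<delta> powr (-2 * s)"
  have q0: "0 < q" unfolding q_def using assms by simp
  have "\<delta> powr (2 - 2 * s) = \<delta> powr (2 + (-2 * s))" by simp
  also have "\<dots> = \<delta> powr 2 * q" unfolding q_def by (rule powr_add)
  also have "\<delta> powr 2 = \<delta>\<^sup>2" using assms(2) by simp
  finally have e: "\<delta> powr (2 - 2 * s) = \<delta>\<^sup>2 * q" .
  have s2: "1/2 < s" and s3: "1 - \<eta> * \<delta>\<^sup>2 / (8 * B + 1) < s" using assms(4) by auto
  have B1: "0 < 8 * B + 1" using assms(3) by simp
  define a where "a = B * (1 - s)"
  define b where "b = \<eta> * \<delta>\<^sup>2"
  have "(1 - s) * (8 * B + 1) < b"
    using s3 B1 unfolding b_def by (simp add: field_simps)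
  moreover have "(1 - s) * (8 * B + 1) = 8 * a + (1 - s)" unfolding a_def by (simp add: algebra_simps)
  ultimately have f1: "8 * a < b" using assms(5) by linarith
  have f2: "b / 2 < b * s"
    using s2 assms(1,2) unfolding b_def by (simp add: field_simps)
  have key0: "4 * a < b * s" using f1 f2 by linarith
  have key: "4 * B * (1 - s) < \<eta> * \<delta>\<^sup>2 * s" using key0 unfolding a_def b_def by (simp add: algebra_simps)
  have "2 * B / s < \<eta> * \<delta>\<^sup>2 / (2 - 2 * s)"
    using key assms s2 by (simp add: field_simps)
  then have "q * (2 * B / s) < q * (\<eta> * \<delta>\<^sup>2 / (2 - 2 * s))"
    using q0 by (rule mult_strict_left_mono)
  then show ?thesis unfolding e q_def[symmetric] by (simp add: field_simps)
qed

lemma good_point: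
  fixes u :: "real \<Rightarrow> 'a::euclidean_space \<Rightarrow> real" and \<psi> :: "'a \<Rightarrow> real"
  assumes M: "\<forall>s\<in>{0<..<1}. \<forall>x. \<bar>u s x\<bar> \<le> M"
    and usc: "\<forall>s\<in>{0<..<1}. usc (u s)"
    and c\<psi>: "continuous_on UNIV \<psi>"
    and rho: "0 < \<delta>" "\<delta> < \<rho>"
    and smax: "\<forall>w\<in>cball x \<rho>. w \<noteq> x \<longrightarrow> upper_relaxed_limit u w - \<psi> w < upper_relaxed_limit u x - \<psi> x"
    and s0: "0 \<le> s0" "s0 < 1"
  shows "\<exists>s y. s0 < s \<and> s < 1 \<and> y \<in> ball x \<delta> \<and> (\<forall>w\<in>cball x \<rho>. u s w - \<psi> w \<le> u s y - \<psi> y)"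
proof (rule ccontr)
  assume nc: "\<not> ?thesis"
  let ?U = "upper_relaxed_limit u"
  have "compact (\<psi> ` cball x \<rho>)"
    by (intro compact_continuous_image continuous_on_subset[OF c\<psi>]) auto
  then obtain C\<psi> where C\<psi>: "\<forall>y\<in>\<psi> ` cball x \<rho>. norm y \<le> C\<psi>"
    using compact_imp_bounded bounded_iff by metis
  have argmax: "\<exists>y\<in>cball x \<rho>. \<forall>w\<in>cball x \<rho>. u s w - \<psi> w \<le> u s y - \<psi> y" if s: "s \<in> {0<..<1}" for s
  proof (rule usc_argmax[of "\<lambda>w. u s w - \<psi> w" "cball x \<rho>" "M + C\<psi>"])
    show "usc (\<lambda>w. u s w - \<psi> w)" using usc s c\<psi> by (intro usc_diff_cont) auto
    fix w assume "w \<in> cball x \<rho>"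
    then have "\<bar>\<psi> w\<bar> \<le> C\<psi>" using C\<psi> by auto
    moreover have "\<bar>u s w\<bar> \<le> M" using M s by blast
    ultimately show "u s w - \<psi> w \<le> M + C\<psi>" by linarith
  qed (use rho in auto)
  define rk where "rk = (\<lambda>k::nat. min (1 - s0) \<rho> / (real k + 1))"
  have mpos: "0 < min (1 - s0) \<rho>" using rho s0 by auto
  have rk0: "rk k > 0" for k unfolding rk_def using mpos by simp
  have rk_le: "rk k \<le> min (1 - s0) \<rho>" for k
  proof -
    have "min (1 - s0) \<rho> / (real k + 1) \<le> min (1 - s0) \<rho> / 1"
      by (rule divide_left_mono) (use mpos in auto)
    then show ?thesis unfolding rk_def by simp
  qed
  have rk_lim: "rk \<longlonglongrightarrow> 0"
  proof -
    have "(\<lambda>k. min (1 - s0) \<rho> * inverse (real (Suc k))) \<longlonglongrightarrow> min (1 - s0) \<rho> * 0"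
      by (intro tendsto_mult tendsto_const LIMSEQ_inverse_real_of_nat)
    then show ?thesis unfolding rk_def by (simp add: divide_inverse add.commute)
  qed
  have "\<forall>k. \<exists>s y. dist y x < rk k \<and> 1 - rk k < s \<and> 0 < s \<and> s < 1 \<and> ?U x - rk k < u s y"
    using url_approx[OF M] rk0 by blast
  then obtain sk xk where skxk: "\<And>k. dist (xk k) x < rk k \<and> 1 - rk k < sk k \<and> 0 < sk k \<and> sk k < 1 \<and> ?U x - rk k < u (sk k) (xk k)"
    by metis
  have "\<forall>k. \<exists>y\<in>cball x \<rho>. \<forall>w\<in>cball x \<rho>. u (sk k) w - \<psi> w \<le> u (sk k) y - \<psi> y"
    using argmax skxk by auto
  then obtain yk where yk: "\<And>k. yk k \<in> cball x \<rho> \<and> (\<forall>w\<in>cball x \<rho>. u (sk k) w - \<psi> w \<le> u (sk k) (yk k) - \<psi> (yk k))"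
    by metis
  have yA: "yk k \<in> cball x \<rho> - ball x \<delta>" for k
  proof -
    have "s0 < sk k" using skxk[of k] rk_le[of k] by linarith
    then show ?thesis using nc yk[of k] skxk[of k] by blast
  qed
  have cA: "compact (cball x \<rho> - ball x \<delta>)" by (intro compact_diff) auto
  obtain w \<sigma> where w: "w \<in> cball x \<rho> - ball x \<delta>" "strict_mono \<sigma>" "(yk \<circ> \<sigma>) \<longlonglongrightarrow> w"
    using seq_compactE[OF compact_imp_seq_compact[OF cA], of yk] yA by blast
  have "(\<lambda>k. dist (xk k) x) \<longlonglongrightarrow> 0"
    by (rule Lim_null_comparison[where g=rk]) (use skxk rk_lim in \<open>auto intro!: always_eventually less_imp_le\<close>)
  then have xk_lim: "xk \<longlonglongrightarrow> x" using tendsto_dist_iff by blast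
  have rs: "(rk \<circ> \<sigma>) \<longlonglongrightarrow> 0" by (rule LIMSEQ_subseq_LIMSEQ[OF rk_lim w(2)])
  have xs: "(xk \<circ> \<sigma>) \<longlonglongrightarrow> x" by (rule LIMSEQ_subseq_LIMSEQ[OF xk_lim w(2)])
  have ic: "isCont \<psi> y" for y using c\<psi> by (simp add: continuous_on_eq_continuous_at)
  define G where "G = (\<lambda>j. ?U x - rk (\<sigma> j) - \<psi> (xk (\<sigma> j)) + \<psi> (yk (\<sigma> j)))"
  have G_lim: "G \<longlonglongrightarrow> ?U x - 0 - \<psi> x + \<psi> w"
    unfolding G_def
    using rs xs w(3) ic
    by (intro tendsto_intros isCont_tendsto_compose[where g=\<psi>]) (auto simp: o_def)
  have "?U x - \<psi> x + \<psi> w \<le> SUPr u r w" if r: "r > 0" for r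
  proof -
    have ev1: "eventually (\<lambda>j. dist (yk (\<sigma> j)) w < r) sequentially"
      using w(3) r unfolding o_def by (rule tendstoD)
    have ev2: "eventually (\<lambda>j. rk (\<sigma> j) < r) sequentially"
      using rs r unfolding o_def by (rule order_tendstoD(2))
    have "eventually (\<lambda>j. G j \<le> SUPr u r w) sequentially"
      using ev1 ev2
    proof eventually_elim
      fix j assume a: "dist (yk (\<sigma> j)) w < r" "rk (\<sigma> j) < r"
      define k where "k = \<sigma> j"
      have sk: "dist (xk k) x < rk k" "1 - rk k < sk k" "0 < sk k" "sk k < 1" "?U x - rk k < u (sk k) (xk k)"
        using skxk[of k] by auto
      have "(sk k, yk k) \<in> Sset r w" unfolding Sset_def using a sk unfolding k_def by auto
      then have le1: "u (sk k) (yk k) \<le> SUPr u r w" using SUPr_upper[OF M] by fastforce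
      have "xk k \<in> cball x \<rho>" using sk(1) rk_le[of k] by (auto simp: dist_commute)
      then have le2: "u (sk k) (xk k) - \<psi> (xk k) \<le> u (sk k) (yk k) - \<psi> (yk k)" using yk[of k] by blast
      show "G j \<le> SUPr u r w" unfolding G_def k_def[symmetric] using le1 le2 sk(5) by linarith
    qed
    then show ?thesis using tendsto_upperbound[OF G_lim] by simp
  qed
  then have "?U x - \<psi> x + \<psi> w \<le> ?U w" by (intro url_ge[OF M])
  moreover have "?U w - \<psi> w < ?U x - \<psi> x"
  proof -
    have "w \<noteq> x" using w(1) rho by auto
    then show ?thesis using smax w(1) by blast
  qed
  ultimately show False by linarith
qed

lemma quad_diff_bound:
  assumes "norm z = 1" "dist A A0 < e"
  shows "\<bar>(blinfun_apply A z) \<bullet> z - (blinfun_apply A0 z) \<bullet> z\<bar> < e"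
proof -
  have "(blinfun_apply A z) \<bullet> z - (blinfun_apply A0 z) \<bullet> z = (blinfun_apply (A - A0) z) \<bullet> z"
    by (simp add: blinfun.diff_left inner_diff_left)
  also have "\<bar>\<dots>\<bar> \<le> norm (A - A0)" by (rule hess_quad_bound[OF assms(1)])
  finally show ?thesis using assms(2) by (simp add: dist_norm)
qed

lemma interior_case:
  fixes \<Omega> :: "'a::euclidean_space set" and g :: "'a \<Rightarrow> real" and u :: "real \<Rightarrow> 'a \<Rightarrow> real"
  assumes opn: "open \<Omega>"
    and M: "\<forall>s\<in>{0<..<1}. \<forall>x. \<bar>u s x\<bar> \<le> M"
    and gb: "\<And>y. y \<notin> \<Omega> \<Longrightarrow> \<bar>g y\<bar> \<le> Mg"
    and visc: "\<forall>s\<in>{0<..<1}. nonlocal_visc_sub s \<Omega> g (u s)"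
    and C2: "C2_on UNIV \<psi> \<psi>' H" and x: "x \<in> \<Omega>"
    and smax: "\<exists>r>0. \<forall>y\<in>ball x r \<inter> closure \<Omega>. y \<noteq> x \<longrightarrow>
                 upper_relaxed_limit u y - \<psi> y < upper_relaxed_limit u x - \<psi> x"
    and z: "z \<in> sphere 0 1"
  shows "0 \<le> (H x) z \<bullet> z"
proof (rule ccontr)
  assume neg: "\<not> ?thesis"
  define \<eta> where "\<eta> = -((H x) z \<bullet> z) / 2"
  have \<eta>0: "0 < \<eta>" using neg unfolding \<eta>_def by simp
  obtain r where r: "r > 0" "\<forall>y\<in>ball x r \<inter> closure \<Omega>. y \<noteq> x \<longrightarrow>
                 upper_relaxed_limit u y - \<psi> y < upper_relaxed_limit u x - \<psi> x" using smax by blast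
  have "continuous_on UNIV H" using C2 unfolding C2_on_def by auto
  then have "continuous (at x) H" by (simp add: continuous_on_eq_continuous_at)
  then obtain \<rho>1 where \<rho>1: "\<rho>1 > 0" "\<forall>w. dist w x < \<rho>1 \<longrightarrow> dist (H w) (H x) < \<eta>"
    using \<eta>0 unfolding continuous_at_eps_delta by blast
  obtain \<rho>2 where \<rho>2: "\<rho>2 > 0" "ball x \<rho>2 \<subseteq> \<Omega>" using opn x openE by blast
  define \<rho> where "\<rho> = min (min \<rho>1 \<rho>2) r / 2"
  have \<rho>0: "0 < \<rho>" unfolding \<rho>_def using \<rho>1 \<rho>2 r by simp
  have cb1: "cball x \<rho> \<subseteq> ball x \<rho>1" "cball x \<rho> \<subseteq> \<Omega>" "cball x \<rho> \<subseteq> ball x r"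
    using \<rho>2(2) \<rho>1 \<rho>2 r unfolding \<rho>_def by (auto simp: subset_iff)
  define \<delta> where "\<delta> = \<rho> / 2"
  have \<delta>0: "0 < \<delta>" "\<delta> < \<rho>" unfolding \<delta>_def using \<rho>0 by auto
  have smax': "\<forall>w\<in>cball x \<rho>. w \<noteq> x \<longrightarrow> upper_relaxed_limit u w - \<psi> w < upper_relaxed_limit u x - \<psi> x"
    using r(2) cb1 closure_subset by blast
  have "(1/2::real) \<in> {0<..<1}" by simp
  then have "\<bar>u (1/2) x\<bar> \<le> M" using M by blast
  then have M0: "0 \<le> M" by linarith
  define B where "B = max M Mg"
  have B0: "0 \<le> B" unfolding B_def using M0 by simp
  define s0 where "s0 = max (1/2) (1 - \<eta> * \<delta>\<^sup>2 / (8 * B + 1))"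
  have s0: "0 \<le> s0" "s0 < 1" unfolding s0_def using \<eta>0 \<delta>0 B0 by auto
  have usc: "\<forall>s\<in>{0<..<1}. usc (u s)" using visc unfolding nonlocal_visc_sub_def by blast
  obtain s y where sy: "s0 < s" "s < 1" "y \<in> ball x \<delta>" "\<forall>w\<in>cball x \<rho>. u s w - \<psi> w \<le> u s y - \<psi> y"
    using good_point[OF M usc C2_continuous[OF C2] \<delta>0 smax' s0] by blast
  have s01: "0 < s" "s < 1" using sy s0 by auto
  have vs: "nonlocal_visc_sub s \<Omega> g (u s)" using visc s01 by auto
  have mb: "\<forall>w\<in>ball y \<delta>. u s w - \<psi> w \<le> u s y - \<psi> y"
  proof
    fix w assume "w \<in> ball y \<delta>"
    then have "dist x w \<le> \<rho>" using sy(3) dist_triangle[of x w y] unfolding \<delta>_def by (auto simp: dist_commute)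
    then show "u s w - \<psi> w \<le> u s y - \<psi> y" using sy(4) by auto
  qed
  have y\<Omega>: "y \<in> \<Omega>" using sy(3) cb1 \<delta>0 by auto
  have Ed: "E_delta s \<Omega> g (ext_g \<Omega> g (u s)) \<psi> y \<delta> \<le> 0"
    using vs C2 mb y\<Omega> \<delta>0 unfolding nonlocal_visc_sub_def by blast
  define v where "v = ext_g \<Omega> g (u s)"
  have ub: "\<bar>u s w\<bar> \<le> B" for w
  proof -
    have "s \<in> {0<..<1}" using s01 by simp
    then have "\<bar>u s w\<bar> \<le> M" using M by blast
    then show ?thesis unfolding B_def by linarith
  qed
  have gb': "\<bar>g w\<bar> \<le> B" if "w \<notin> \<Omega>" for w
    using gb[OF that] unfolding B_def by linarith
  have vb: "\<bar>v w\<bar> \<le> B" for w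
    unfolding v_def by (rule ext_g_bound) (use ub gb' in auto)
  have far: "\<bar>ext_g \<Omega> g v w - v y\<bar> \<le> 2 * B" for w
  proof -
    have "\<bar>ext_g \<Omega> g v w\<bar> \<le> B" by (rule ext_g_bound) (use vb gb' in auto)
    then show ?thesis using vb[of y] by linarith
  qed
  have bdd: "bdd_below ((\<lambda>z. E_z s \<Omega> g v \<psi> y \<delta> z) ` sphere 0 1)"
    by (rule E_bdd_below[OF C2 s01 \<delta>0(1) far])
  have Ez0: "0 \<le> E_z s \<Omega> g v \<psi> y \<delta> z"
  proof -
    have "(INF z\<in>sphere 0 1. E_z s \<Omega> g v \<psi> y \<delta> z) \<le> E_z s \<Omega> g v \<psi> y \<delta> z"
      by (rule cINF_lower[OF bdd z])
    moreover have "0 \<le> (INF z\<in>sphere 0 1. E_z s \<Omega> g v \<psi> y \<delta> z)"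
      using Ed unfolding E_delta_def v_def by simp
    ultimately show ?thesis by linarith
  qed
  obtain C where C: "\<forall>w\<in>cball y \<delta>. norm (H w) \<le> C" using C2_hess_bound[OF C2] by blast
  have nz: "norm z = 1" using z by simp
  have bnd: "-C \<le> (H (y + \<theta> *\<^sub>R z)) z \<bullet> z \<and> (H (y + \<theta> *\<^sub>R z)) z \<bullet> z \<le> -\<eta>" if th: "\<bar>\<theta>\<bar> < \<delta>" for \<theta>
  proof
    have yw: "dist (y + \<theta> *\<^sub>R z) y < \<delta>" using th nz by (simp add: dist_norm)
    then have "y + \<theta> *\<^sub>R z \<in> cball y \<delta>" by (simp add: dist_commute less_imp_le)
    then have "norm (H (y + \<theta> *\<^sub>R z)) \<le> C" using C by blast
    moreover have "\<bar>(H (y + \<theta> *\<^sub>R z)) z \<bullet> z\<bar> \<le> norm (H (y + \<theta> *\<^sub>R z))" by (rule hess_quad_bound[OF nz])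
    ultimately show "-C \<le> (H (y + \<theta> *\<^sub>R z)) z \<bullet> z" by linarith
    have "dist (y + \<theta> *\<^sub>R z) x \<le> dist (y + \<theta> *\<^sub>R z) y + dist y x" by (rule dist_triangle)
    also have "\<dots> < \<rho>" using yw sy(3) unfolding \<delta>_def by (simp add: dist_commute)
    finally have "y + \<theta> *\<^sub>R z \<in> cball x \<rho>" by (simp add: dist_commute)
    then have "y + \<theta> *\<^sub>R z \<in> ball x \<rho>1" using cb1(1) by blast
    then have "dist (y + \<theta> *\<^sub>R z) x < \<rho>1" by (simp add: dist_commute)
    then have "dist (H (y + \<theta> *\<^sub>R z)) (H x) < \<eta>" using \<rho>1(2) by blast
    then have "\<bar>(H (y + \<theta> *\<^sub>R z)) z \<bullet> z - (H x) z \<bullet> z\<bar> < \<eta>" by (rule quad_diff_bound[OF nz])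
    then show "(H (y + \<theta> *\<^sub>R z)) z \<bullet> z \<le> -\<eta>" unfolding \<eta>_def by linarith
  qed
  have "E_z s \<Omega> g v \<psi> y \<delta> z \<le> c_frac s * (-\<eta> * (\<delta> powr (2 - 2 * s) / (2 - 2 * s)) + 2 * B * (\<delta> powr (-2 * s) / s))"
    by (rule E_z_bounds(1)[OF C2 s01 \<delta>0(1) bnd far])
  also have "\<dots> < 0"
  proof (rule mult_pos_neg)
    show "0 < c_frac s" by (rule c_frac_pos[OF s01])
    show "-\<eta> * (\<delta> powr (2 - 2 * s) / (2 - 2 * s)) + 2 * B * (\<delta> powr (-2 * s) / s) < 0"
      by (rule bracket_neg[OF \<eta>0 \<delta>0(1) B0]) (use sy s0_def in auto)
  qed
  finally show False using Ez0 by linarith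
qed



definition outerL :: "'a::euclidean_space \<Rightarrow> 'a \<Rightarrow> 'a \<Rightarrow>\<^sub>L 'a" where
  "outerL v w = blinfun_scaleR_left v o\<^sub>L blinfun_inner_left w"

lemma outerL_apply: "blinfun_apply (outerL v w) h = (h \<bullet> w) *\<^sub>R v"
  unfolding outerL_def by simp

lemma C2_D:
  assumes "C2_on UNIV f f' H"
  shows "(f has_derivative (\<lambda>h. f' x \<bullet> h)) (at x)" "(f' has_derivative (\<lambda>h. blinfun_apply (H x) h)) (at x)"
    "continuous_on UNIV H" "continuous_on UNIV f" "continuous_on UNIV f'"
proof -
  show d1: "(f has_derivative (\<lambda>h. f' x \<bullet> h)) (at x)" for x
    using assms unfolding C2_on_def by auto
  show d2: "(f' has_derivative (\<lambda>h. blinfun_apply (H x) h)) (at x)" for x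
    using assms unfolding C2_on_def by auto
  show "continuous_on UNIV H" using assms unfolding C2_on_def by auto
  show "continuous_on UNIV f"
    by (meson d1 continuous_at_imp_continuous_on has_derivative_continuous)
  show "continuous_on UNIV f'"
    by (meson d2 continuous_at_imp_continuous_on has_derivative_continuous)
qed

lemma C2I:
  assumes "\<And>x. (f has_derivative (\<lambda>h. f' x \<bullet> h)) (at x)"
    "\<And>x. (f' has_derivative (\<lambda>h. blinfun_apply (H x) h)) (at x)" "continuous_on UNIV H"
  shows "C2_on UNIV f f' H"
  using assms unfolding C2_on_def by auto

lemma C2_add:
  assumes f: "C2_on UNIV f f' Hf" and g: "C2_on UNIV g g' Hg"
  shows "C2_on UNIV (\<lambda>x. f x + g x) (\<lambda>x. f' x + g' x) (\<lambda>x. Hf x + Hg x)"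
proof (rule C2I)
  fix x
  show "((\<lambda>x. f x + g x) has_derivative (\<lambda>h. (f' x + g' x) \<bullet> h)) (at x)"
    using has_derivative_add[OF C2_D(1)[OF f] C2_D(1)[OF g]] by (simp add: inner_add_left)
  show "((\<lambda>x. f' x + g' x) has_derivative (\<lambda>h. blinfun_apply (Hf x + Hg x) h)) (at x)"
    using has_derivative_add[OF C2_D(2)[OF f] C2_D(2)[OF g]] by (simp add: blinfun.add_left)
next
  show "continuous_on UNIV (\<lambda>x. Hf x + Hg x)"
    using C2_D(3)[OF f] C2_D(3)[OF g] by (intro continuous_intros)
qed

lemma C2_cmult:
  assumes f: "C2_on UNIV f f' Hf"
  shows "C2_on UNIV (\<lambda>x. c * f x) (\<lambda>x. c *\<^sub>R f' x) (\<lambda>x. c *\<^sub>R Hf x)"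
proof (rule C2I)
  fix x
  show "((\<lambda>x. c * f x) has_derivative (\<lambda>h. (c *\<^sub>R f' x) \<bullet> h)) (at x)"
    using has_derivative_mult_right[OF C2_D(1)[OF f], of c] by simp
  show "((\<lambda>x. c *\<^sub>R f' x) has_derivative (\<lambda>h. blinfun_apply (c *\<^sub>R Hf x) h)) (at x)"
    by (rule has_derivative_eq_rhs[OF has_derivative_scaleR_right[OF C2_D(2)[OF f], of c]])
       (simp add: fun_eq_iff blinfun.scaleR_left)
next
  show "continuous_on UNIV (\<lambda>x. c *\<^sub>R Hf x)"
    using C2_D(3)[OF f] by (intro continuous_intros)
qed

lemma C2_lin: "C2_on UNIV (\<lambda>x. a \<bullet> x + b) (\<lambda>x. a) (\<lambda>x. 0)"
  by (rule C2I) (auto intro!: derivative_eq_intros simp: inner_commute)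

lemma C2_sqnorm: "C2_on UNIV (\<lambda>x. norm (x - x0)^2) (\<lambda>x. 2 *\<^sub>R (x - x0)) (\<lambda>x. 2 *\<^sub>R id_blinfun)"
proof (rule C2I)
  fix x
  have e: "(\<lambda>x. norm (x - x0)^2) = (\<lambda>x. (x - x0) \<bullet> (x - x0))" by (simp add: power2_norm_eq_inner)
  show "((\<lambda>x. norm (x - x0)^2) has_derivative (\<lambda>h. (2 *\<^sub>R (x - x0)) \<bullet> h)) (at x)"
    unfolding e by (auto intro!: derivative_eq_intros simp: inner_commute)
  show "((\<lambda>x. 2 *\<^sub>R (x - x0)) has_derivative (\<lambda>h. blinfun_apply (2 *\<^sub>R id_blinfun) h)) (at x)"
    by (rule has_derivative_eq_rhs, (rule derivative_eq_intros)+)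
       (auto simp: fun_eq_iff blinfun.scaleR_left)
qed simp

lemma C2_comp:
  fixes F F' F'' :: "real \<Rightarrow> real"
  assumes f: "C2_on UNIV f f' Hf"
    and dF: "\<And>t. (F has_real_derivative F' t) (at t)"
    and dF': "\<And>t. (F' has_real_derivative F'' t) (at t)"
    and cF'': "continuous_on UNIV F''"
  shows "C2_on UNIV (\<lambda>x. F (f x)) (\<lambda>x. F' (f x) *\<^sub>R f' x)
           (\<lambda>x. F'' (f x) *\<^sub>R outerL (f' x) (f' x) + F' (f x) *\<^sub>R Hf x)"
proof (rule C2I)
  fix x
  have dF1: "(F has_derivative (\<lambda>h. F' (f x) * h)) (at (f x))"
    using dF[of "f x"] by (simp add: has_field_derivative_def)
  have dF2: "(F' has_derivative (\<lambda>h. F'' (f x) * h)) (at (f x))"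
    using dF'[of "f x"] by (simp add: has_field_derivative_def)
  show "((\<lambda>x. F (f x)) has_derivative (\<lambda>h. (F' (f x) *\<^sub>R f' x) \<bullet> h)) (at x)"
    using has_derivative_compose[OF C2_D(1)[OF f] dF1] by (simp add: o_def)
  have a: "((\<lambda>x. F' (f x)) has_derivative (\<lambda>h. F'' (f x) * (f' x \<bullet> h))) (at x)"
    using has_derivative_compose[OF C2_D(1)[OF f] dF2] by (simp add: o_def)
  show "((\<lambda>x. F' (f x) *\<^sub>R f' x) has_derivative
          (\<lambda>h. blinfun_apply (F'' (f x) *\<^sub>R outerL (f' x) (f' x) + F' (f x) *\<^sub>R Hf x) h)) (at x)"
    by (rule has_derivative_eq_rhs[OF has_derivative_scaleR[OF a C2_D(2)[OF f]]])
       (auto simp: fun_eq_iff outerL_apply blinfun.add_left blinfun.scaleR_left inner_commute)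
next
  have cf: "continuous_on UNIV f" "continuous_on UNIV f'" "continuous_on UNIV Hf"
    using C2_D[OF f] by auto
  have cF': "continuous_on UNIV F'"
    by (meson dF' continuous_at_imp_continuous_on DERIV_isCont)
  have c1: "continuous_on UNIV (\<lambda>x. F'' (f x))"
    by (rule continuous_on_compose2[OF cF'' cf(1)]) auto
  have c2: "continuous_on UNIV (\<lambda>x. F' (f x))"
    by (rule continuous_on_compose2[OF cF' cf(1)]) auto
  show "continuous_on UNIV (\<lambda>x. F'' (f x) *\<^sub>R outerL (f' x) (f' x) + F' (f x) *\<^sub>R Hf x)"
    unfolding outerL_def using c1 c2 cf by (intro continuous_intros)
qed

lemma deriv_at0:
  fixes f :: "real \<Rightarrow> real"
  assumes "f 0 = 0" "\<And>h. \<bar>h\<bar> < 1 \<Longrightarrow> \<bar>f h\<bar> \<le> C * h\<^sup>2"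
  shows "(f has_real_derivative 0) (at 0)"
proof -
  have "((\<lambda>h. (f (0 + h) - f 0) / h) \<longlongrightarrow> 0) (at 0)"
  proof (rule Lim_null_comparison)
    show "eventually (\<lambda>h. norm ((f (0 + h) - f 0) / h) \<le> C * \<bar>h\<bar>) (at 0)"
      unfolding eventually_at
    proof (intro exI[of _ 1] conjI ballI impI)
      fix h :: real assume h: "h \<in> UNIV" "h \<noteq> 0 \<and> dist h 0 < 1"
      then have h1: "\<bar>h\<bar> < 1" "0 < \<bar>h\<bar>" by auto
      have "norm ((f (0 + h) - f 0) / h) = \<bar>f h\<bar> / \<bar>h\<bar>" using assms(1) by simp
      also have "\<dots> \<le> C * h\<^sup>2 / \<bar>h\<bar>" by (rule divide_right_mono[OF assms(2)[OF h1(1)]]) simp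
      also have "C * h\<^sup>2 / \<bar>h\<bar> = C * \<bar>h\<bar>"
      proof -
        have aux: "C * (a * a) / a = C * a" if "a \<noteq> 0" for a :: real using that by simp
        have "h\<^sup>2 = \<bar>h\<bar> * \<bar>h\<bar>" by (simp add: power2_eq_square)
        then show ?thesis using aux[of "\<bar>h\<bar>"] h1 by simp
      qed
      finally show "norm ((f (0 + h) - f 0) / h) \<le> C * \<bar>h\<bar>" .
    qed simp
    show "((\<lambda>h. C * \<bar>h\<bar>) \<longlongrightarrow> 0) (at 0)"
      by (rule tendsto_eq_intros) (auto intro!: tendsto_eq_intros)
  qed
  then show ?thesis by (simp add: DERIV_def)
qed

definition m3 :: "real \<Rightarrow> real" where "m3 t = (max 0 t)^3"

lemma DERIV_m3: "(m3 has_real_derivative 3 * (max 0 t)^2) (at t)"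
proof (cases "t > 0")
  case True
  have "((\<lambda>x. x^3) has_real_derivative 3 * t^2) (at t)"
    by (auto intro!: derivative_eq_intros)
  then have "(m3 has_real_derivative 3 * t^2) (at t)"
    by (rule has_field_derivative_transform_within_open[where S="{0<..}"]) (use True in \<open>auto simp: m3_def\<close>)
  then show ?thesis using True by simp
next
  case False
  show ?thesis
  proof (cases "t < 0")
    case True
    have "((\<lambda>x. 0) has_real_derivative 0) (at t)" by simp
    then have "(m3 has_real_derivative 0) (at t)"
      by (rule has_field_derivative_transform_within_open[where S="{..<0}"]) (use True in \<open>auto simp: m3_def\<close>)
    then show ?thesis using True by simp
  next
    case False
    then have t0: "t = 0" using \<open>\<not> t > 0\<close> by simp
    have "(m3 has_real_derivative 0) (at 0)"
    proof (rule deriv_at0[where C=1])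
      fix h :: real assume h: "\<bar>h\<bar> < 1"
      have a: "0 \<le> max 0 h" "max 0 h \<le> \<bar>h\<bar>" by auto
      have "max 0 h ^ 3 \<le> \<bar>h\<bar> ^ 3" by (rule power_mono[OF a(2) a(1)])
      also have "\<bar>h\<bar> ^ 3 \<le> \<bar>h\<bar> ^ 2" using h by (intro power_decreasing) auto
      finally show "\<bar>m3 h\<bar> \<le> 1 * h\<^sup>2" unfolding m3_def using a by simp
    qed (simp add: m3_def)
    then show ?thesis using t0 by simp
  qed
qed

lemma DERIV_m3': "((\<lambda>t. 3 * (max 0 t)^2) has_real_derivative 6 * max 0 t) (at t)"
proof (cases "t > 0")
  case True
  have "((\<lambda>x. 3 * x^2) has_real_derivative 6 * t) (at t)"
    by (auto intro!: derivative_eq_intros)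
  then have "((\<lambda>t. 3 * (max 0 t)^2) has_real_derivative 6 * t) (at t)"
    by (rule has_field_derivative_transform_within_open[where S="{0<..}"]) (use True in auto)
  then show ?thesis using True by simp
next
  case False
  show ?thesis
  proof (cases "t < 0")
    case True
    have "((\<lambda>x. 0) has_real_derivative 0) (at t)" by simp
    then have "((\<lambda>t. 3 * (max 0 t)^2) has_real_derivative 0) (at t)"
      by (rule has_field_derivative_transform_within_open[where S="{..<0}"]) (use True in auto)
    then show ?thesis using True by simp
  next
    case False
    then have t0: "t = 0" using \<open>\<not> t > 0\<close> by simp
    have "((\<lambda>t. 3 * (max 0 t)^2) has_real_derivative 0) (at 0)"
    proof (rule deriv_at0[where C=3])
      fix h :: real assume h: "\<bar>h\<bar> < 1"
      have a: "0 \<le> max 0 h" "max 0 h \<le> \<bar>h\<bar>" by auto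
      have "max 0 h ^ 2 \<le> \<bar>h\<bar> ^ 2" by (rule power_mono[OF a(2) a(1)])
      then show "\<bar>3 * (max 0 h)^2\<bar> \<le> 3 * h\<^sup>2" by simp
    qed simp
    then show ?thesis using t0 by simp
  qed
qed

lemma C2_m3:
  assumes f: "C2_on UNIV f f' Hf"
  shows "C2_on UNIV (\<lambda>x. m3 (f x)) (\<lambda>x. (3 * (max 0 (f x))^2) *\<^sub>R f' x)
           (\<lambda>x. (6 * max 0 (f x)) *\<^sub>R outerL (f' x) (f' x) + (3 * (max 0 (f x))^2) *\<^sub>R Hf x)"
  unfolding m3_def[abs_def] using DERIV_m3 unfolding m3_def[abs_def]
  by (intro C2_comp[OF f _ DERIV_m3']) (auto intro!: continuous_intros)

definition C2ex :: "('a::euclidean_space \<Rightarrow> real) \<Rightarrow> bool" where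
  "C2ex f \<longleftrightarrow> (\<exists>f' H. C2_on UNIV f f' H)"

lemma C2ex_cong: "C2ex f \<Longrightarrow> (\<And>x. f x = g x) \<Longrightarrow> C2ex g"
proof -
  assume "C2ex f" "\<And>x. f x = g x"
  then have "f = g" by auto
  with \<open>C2ex f\<close> show "C2ex g" by simp
qed

lemma C2ex_add: "C2ex f \<Longrightarrow> C2ex g \<Longrightarrow> C2ex (\<lambda>x. f x + g x)"
  unfolding C2ex_def using C2_add by blast

lemma C2ex_cmult: "C2ex f \<Longrightarrow> C2ex (\<lambda>x. c * f x)"
  unfolding C2ex_def using C2_cmult by blast

lemma C2ex_lin: "C2ex (\<lambda>x. a \<bullet> x + b)"
  unfolding C2ex_def using C2_lin by blast

lemma C2ex_const: "C2ex (\<lambda>x. b)"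
  using C2ex_lin[of 0 b] by (rule C2ex_cong) simp

lemma C2ex_sqnorm: "C2ex (\<lambda>x. norm (x - x0)^2)"
  unfolding C2ex_def using C2_sqnorm by blast

lemma C2ex_m3: "C2ex f \<Longrightarrow> C2ex (\<lambda>x. m3 (f x))"
  unfolding C2ex_def using C2_m3 by blast

lemma C2ex_sq: "C2ex f \<Longrightarrow> C2ex (\<lambda>x. (f x)\<^sup>2)"
proof -
  assume "C2ex f"
  then obtain f' H where f: "C2_on UNIV f f' H" unfolding C2ex_def by blast
  have d1: "((\<lambda>t. t\<^sup>2) has_real_derivative 2 * t) (at t)" for t :: real
    by (auto intro!: derivative_eq_intros)
  have d2: "((\<lambda>t. 2 * t) has_real_derivative (\<lambda>t. 2) t) (at t)" for t :: real
    by (auto intro!: derivative_eq_intros)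
  show ?thesis unfolding C2ex_def
    using C2_comp[OF f d1 d2] by (auto intro: continuous_intros)
qed



lemma sc_convex: "strictly_convex \<Omega> \<Longrightarrow> convex \<Omega>"
  unfolding strictly_convex_def convex_contains_open_segment
  using closure_subset by blast

lemma normal_exists:
  fixes \<Omega> :: "'a::euclidean_space set"
  assumes opn: "open \<Omega>" and cv: "convex \<Omega>" and x0: "x0 \<in> frontier \<Omega>"
  shows "\<exists>\<nu>. norm \<nu> = 1 \<and> (\<forall>y\<in>\<Omega>. \<nu> \<bullet> (y - x0) < 0) \<and> (\<forall>y\<in>closure \<Omega>. \<nu> \<bullet> (y - x0) \<le> 0)"
proof -
  have x0n: "x0 \<notin> \<Omega>" using x0 opn by (simp add: frontier_def interior_open)
  have cS: "convex ((+) (-x0) ` \<Omega>)" by (rule convex_translation[OF cv])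
  have "0 \<notin> (+) (-x0) ` \<Omega>" using x0n by auto
  then obtain a where a: "a \<noteq> 0" "\<forall>x\<in>(+) (-x0) ` \<Omega>. 0 \<le> inner a x"
    using separating_hyperplane_set_0[OF cS] by blast
  define \<nu> where "\<nu> = - a /\<^sub>R norm a"
  have n1: "norm \<nu> = 1" unfolding \<nu>_def using a(1) by simp
  have le: "\<nu> \<bullet> (y - x0) \<le> 0" if "y \<in> \<Omega>" for y
  proof -
    have "0 \<le> a \<bullet> (-x0 + y)" using a(2) that by auto
    then show ?thesis unfolding \<nu>_def using a(1)
      by (simp add: inner_commute divide_nonneg_pos algebra_simps)
  qed
  have lt: "\<nu> \<bullet> (y - x0) < 0" if y: "y \<in> \<Omega>" for y
  proof (rule ccontr)
    assume "\<not> \<nu> \<bullet> (y - x0) < 0"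
    then have e0: "\<nu> \<bullet> (y - x0) = 0" using le[OF y] by linarith
    obtain e where e: "e > 0" "ball y e \<subseteq> \<Omega>" using opn y openE by blast
    have "y + (e/2) *\<^sub>R \<nu> \<in> ball y e" using e n1 by (simp add: dist_norm)
    then have "y + (e/2) *\<^sub>R \<nu> \<in> \<Omega>" using e by blast
    then have "\<nu> \<bullet> (y + (e/2) *\<^sub>R \<nu> - x0) \<le> 0" by (rule le)
    moreover have "\<nu> \<bullet> (y + (e/2) *\<^sub>R \<nu> - x0) = e/2"
    proof -
      have "\<nu> \<bullet> (y + (e/2) *\<^sub>R \<nu> - x0) = \<nu> \<bullet> (y - x0) + (e/2) * (\<nu> \<bullet> \<nu>)"
        by (simp add: algebra_simps inner_add_right inner_diff_right)
      also have "\<nu> \<bullet> \<nu> = 1" using n1 by (simp add: power2_norm_eq_inner[symmetric])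
      finally show ?thesis using e0 by simp
    qed
    ultimately show False using e by simp
  qed
  have "closure \<Omega> \<subseteq> {y. \<nu> \<bullet> y \<le> \<nu> \<bullet> x0}"
    by (rule closure_minimal) (use le in \<open>auto simp: inner_diff_right intro: closed_halfspace_le\<close>)
  then have "\<forall>y\<in>closure \<Omega>. \<nu> \<bullet> (y - x0) \<le> 0" by (auto simp: inner_diff_right)
  then show ?thesis using n1 lt by blast
qed

lemma sc_gap:
  fixes \<Omega> :: "'a::euclidean_space set"
  assumes sc: "strictly_convex \<Omega>" and bd: "bounded \<Omega>" and n1: "norm \<nu> = 1"
    and lt: "\<forall>y\<in>\<Omega>. \<nu> \<bullet> (y - x0) < 0" and le: "\<forall>y\<in>closure \<Omega>. \<nu> \<bullet> (y - x0) \<le> 0"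
    and x0: "x0 \<in> closure \<Omega>" and r0: "0 < r0"
  shows "\<exists>\<tau>0>0. \<forall>w\<in>closure \<Omega>. r0 \<le> dist w x0 \<longrightarrow> \<nu> \<bullet> (w - x0) \<le> -\<tau>0"
proof -
  define K where "K = closure \<Omega> \<inter> {w. r0 \<le> dist w x0}"
  have cK: "compact K" unfolding K_def
    using bd by (intro compact_Int_closed) (auto simp: compact_closure closed_Collect_le continuous_on_dist continuous_intros)
  show ?thesis
  proof (cases "K = {}")
    case True
    then show ?thesis unfolding K_def by (intro exI[of _ 1]) auto
  next
    case False
    have "continuous_on K (\<lambda>w. \<nu> \<bullet> (w - x0))" by (intro continuous_intros)
    then obtain w where w: "w \<in> K" "\<forall>y\<in>K. \<nu> \<bullet> (y - x0) \<le> \<nu> \<bullet> (w - x0)"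
      using continuous_attains_sup[OF cK False] by blast
    have wc: "w \<in> closure \<Omega>" "r0 \<le> dist w x0" using w(1) unfolding K_def by auto
    have neg: "\<nu> \<bullet> (w - x0) < 0"
    proof (rule ccontr)
      assume "\<not> \<nu> \<bullet> (w - x0) < 0"
      then have z: "\<nu> \<bullet> (w - x0) = 0" using le wc(1) by force
      have "w \<noteq> x0" using wc r0 by auto
      then have "midpoint x0 w \<in> open_segment x0 w" by simp
      then have m: "midpoint x0 w \<in> \<Omega>" using sc x0 wc(1) unfolding strictly_convex_def by blast
      have "\<nu> \<bullet> (midpoint x0 w - x0) = (\<nu> \<bullet> (w - x0)) / 2"
        unfolding midpoint_def by (simp add: algebra_simps inner_diff_right inner_add_right)
      then show False using lt m z by force
    qed
    show ?thesis
      by (intro exI[of _ "- (\<nu> \<bullet> (w - x0))"]) (use neg w(2) in \<open>auto simp: K_def\<close>)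
  qed
qed



definition bar :: "'a::euclidean_space \<Rightarrow> 'a \<Rightarrow> real \<Rightarrow> real \<Rightarrow> real \<Rightarrow> real \<Rightarrow> real \<Rightarrow> real \<Rightarrow> real \<Rightarrow> 'a \<Rightarrow> real" where
  "bar \<nu> x0 A K K' L \<delta> \<mu> c0 y =
     A + (-K) * (\<nu> \<bullet> y + -(\<nu> \<bullet> x0)) + (-1) * (\<nu> \<bullet> y + -(\<nu> \<bullet> x0))\<^sup>2
     + K' * m3 (\<nu> \<bullet> y + (-(\<nu> \<bullet> x0) - \<delta>))
     + L * m3 ((\<nu> \<bullet> y + -(\<nu> \<bullet> x0)) + \<mu> * norm (y - x0)^2 + (-c0))"

lemma bar_C2: "C2ex (\<lambda>y. bar \<nu> x0 A K K' L \<delta> \<mu> c0 y)"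
  unfolding bar_def
  by (intro C2ex_add C2ex_const C2ex_cmult C2ex_sq C2ex_m3 C2ex_lin C2ex_sqnorm)

lemma bar_eq: "bar \<nu> x0 A K K' L \<delta> \<mu> c0 y =
   A - K * (\<nu> \<bullet> (y - x0)) - (\<nu> \<bullet> (y - x0))\<^sup>2 + K' * m3 (\<nu> \<bullet> (y - x0) - \<delta>)
   + L * m3 (\<nu> \<bullet> (y - x0) + \<mu> * norm (y - x0)^2 - c0)"
  unfolding bar_def by (simp add: inner_diff_right algebra_simps)

lemma m3_nonneg: "0 \<le> m3 t" unfolding m3_def by simp
lemma m3_zero: "t \<le> 0 \<Longrightarrow> m3 t = 0" unfolding m3_def by simp
lemma m3_ge: "0 \<le> a \<Longrightarrow> a \<le> t \<Longrightarrow> a^3 \<le> m3 t"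
  unfolding m3_def by (rule power_mono) auto

lemma inner_dist_bound:
  assumes "norm \<nu> = 1" shows "\<bar>\<nu> \<bullet> (w - c)\<bar> \<le> dist w c"
proof -
  have "\<bar>\<nu> \<bullet> (w - c)\<bar> \<le> norm \<nu> * norm (w - c)" by (rule Cauchy_Schwarz_ineq2)
  then show ?thesis using assms by (simp add: dist_norm)
qed

lemma Bzero:
  fixes \<Omega> :: "'a::euclidean_space set"
  assumes n1: "norm \<nu> = 1" and le: "\<forall>y\<in>closure \<Omega>. \<nu> \<bullet> (y - x0) \<le> 0"
    and gap: "\<forall>w\<in>closure \<Omega>. r/4 \<le> dist w x0 \<longrightarrow> \<nu> \<bullet> (w - x0) \<le> -\<tau>0"
    and Db: "\<forall>w\<in>closure \<Omega>. dist w x0 \<le> D"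
    and R0: "R0 = D + 2" and mu: "\<mu> = \<tau>0 / (4 * R0\<^sup>2)" and c0: "c0 = 3 * \<mu> * r\<^sup>2 / 4"
    and d: "\<delta> \<le> 1" "\<delta> \<le> r/4" "\<delta> \<le> 3 * \<mu> * r\<^sup>2 / 16" "\<delta> \<le> 3 * \<tau>0 / 4"
    and pos: "0 < \<tau>0" "0 < r"
    and c: "c \<in> closure \<Omega>" and wc: "dist w c < \<delta>"
  shows "\<nu> \<bullet> (w - x0) + \<mu> * norm (w - x0)^2 - c0 \<le> 0"
proof -
  have D0: "0 \<le> D" using Db c by (meson dist_not_less_zero order_trans not_le)
  have R0p: "0 < R0" using R0 D0 by simp
  have mu0: "0 < \<mu>" unfolding mu using pos R0p by simp
  have xi: "\<nu> \<bullet> (w - x0) \<le> \<nu> \<bullet> (c - x0) + \<delta>"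
  proof -
    have "\<nu> \<bullet> (w - x0) = \<nu> \<bullet> (c - x0) + \<nu> \<bullet> (w - c)" by (simp add: inner_diff_right)
    moreover have "\<bar>\<nu> \<bullet> (w - c)\<bar> \<le> dist w c" by (rule inner_dist_bound[OF n1])
    ultimately show ?thesis using wc by linarith
  qed
  have tri: "dist w x0 \<le> dist w c + dist c x0" by (rule dist_triangle)
  show ?thesis
  proof (cases "dist c x0 < r/4")
    case True
    have "dist w x0 \<le> r/2" using tri True wc d by linarith
    then have "norm (w - x0) \<le> r/2" by (simp add: dist_norm)
    then have "norm (w - x0)^2 \<le> (r/2)^2" by (rule power_mono) simp
    then have "\<mu> * norm (w - x0)^2 \<le> \<mu> * (r/2)^2" using mu0 by (intro mult_left_mono) auto
    also have "\<mu> * (r/2)^2 = (\<mu> * r\<^sup>2) / 4" by (simp add: power2_eq_square)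
    finally have a: "\<mu> * norm (w - x0)^2 \<le> (\<mu> * r\<^sup>2) / 4" .
    have b: "\<delta> \<le> 3 * (\<mu> * r\<^sup>2) / 16" "c0 = 3 * (\<mu> * r\<^sup>2) / 4" using d(3) c0 by (simp_all add: mult.assoc)
    have m0: "0 \<le> \<mu> * r\<^sup>2" using mu0 by simp
    moreover have "\<nu> \<bullet> (c - x0) \<le> 0" using le c by blast
    ultimately show ?thesis using xi a b by linarith
  next
    case False
    then have g: "\<nu> \<bullet> (c - x0) \<le> -\<tau>0" using gap c by auto
    have "dist w x0 \<le> R0" using tri Db c wc d R0 by force
    then have "norm (w - x0) \<le> R0" by (simp add: dist_norm)
    then have "norm (w - x0)^2 \<le> R0^2" by (rule power_mono) simp
    then have "\<mu> * norm (w - x0)^2 \<le> \<mu> * R0^2" using mu0 by (intro mult_left_mono) auto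
    also have "\<mu> * R0^2 = \<tau>0 / 4" unfolding mu using R0p by simp
    finally have "\<mu> * norm (w - x0)^2 \<le> \<tau>0 / 4" .
    moreover have "0 \<le> c0" unfolding c0 using mu0 by simp
    ultimately show ?thesis using xi g d(4) by linarith
  qed
qed

lemma bar_ext:
  fixes \<Omega> :: "'a::euclidean_space set"
  assumes n1: "norm \<nu> = 1"
    and A: "A = g x0 + \<epsilon>" and ep: "0 < \<epsilon>"
    and gcl: "\<And>y. y \<notin> \<Omega> \<Longrightarrow> dist y x0 < r \<Longrightarrow> g y \<le> g x0 + \<epsilon>/2"
    and gb: "\<And>y. y \<notin> \<Omega> \<Longrightarrow> \<bar>g y\<bar> \<le> Mg"
    and y: "y \<notin> \<Omega>" "dist y x0 \<le> R0"
    and tau: "0 < \<tau>" "\<tau> \<le> 1" "\<tau> \<le> \<epsilon>/2" "\<tau> \<le> \<mu> * r\<^sup>2 / 8"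
    and K: "K = (Mg + \<bar>A\<bar> + R0\<^sup>2) / \<tau>"
    and d: "0 < \<delta>" "\<delta> \<le> 1" "\<delta> \<le> \<epsilon> / (8 * K + 1)" "\<delta> \<le> \<epsilon> / 16"
    and K': "K' = (Mg + \<bar>A\<bar> + K * R0 + R0\<^sup>2) / \<delta>^3"
    and c0: "c0 = 3 * \<mu> * r\<^sup>2 / 4" and mu0: "0 < \<mu>" and r0: "0 < r"
    and L: "L = (Mg + \<bar>A\<bar> + 2 * K * \<delta> + R0\<^sup>2) / (\<mu> * r\<^sup>2 / 8)^3"
  shows "g y \<le> bar \<nu> x0 A K K' L \<delta> \<mu> c0 y"
proof -
  define \<xi> where "\<xi> = \<nu> \<bullet> (y - x0)"
  define p where "p = \<xi> + \<mu> * norm (y - x0)^2 - c0"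
  have Mg0: "0 \<le> Mg" using gb[OF y(1)] by linarith
  have gy: "g y \<le> Mg" using gb[OF y(1)] by linarith
  have K0: "0 \<le> K" unfolding K using tau Mg0 by simp
  have Kt: "K * \<tau> = Mg + \<bar>A\<bar> + R0\<^sup>2" unfolding K using tau by simp
  have K'0: "0 \<le> K'" unfolding K' using d Mg0 K0 y(2) by (auto intro!: divide_nonneg_pos add_nonneg_nonneg
      mult_nonneg_nonneg order_trans[OF zero_le_dist y(2)])
  have K'd: "K' * \<delta>^3 = Mg + \<bar>A\<bar> + K * R0 + R0\<^sup>2" unfolding K' using d by simp
  have p00: "0 < \<mu> * r\<^sup>2 / 8" using mu0 r0 by simp
  have L0: "0 \<le> L" unfolding L using p00 Mg0 K0 d by (intro divide_nonneg_pos) auto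
  have Lp: "L * (\<mu> * r\<^sup>2 / 8)^3 = Mg + \<bar>A\<bar> + 2 * K * \<delta> + R0\<^sup>2"
  proof -
    have "(\<mu> * r\<^sup>2 / 8)^3 \<noteq> 0" using mu0 r0 by simp
    then show ?thesis unfolding L by (simp del: power_divide power_mult_distrib)
  qed
  have bar: "bar \<nu> x0 A K K' L \<delta> \<mu> c0 y = A - K * \<xi> - \<xi>\<^sup>2 + K' * m3 (\<xi> - \<delta>) + L * m3 p"
    unfolding bar_eq \<xi>_def p_def ..
  have q1: "0 \<le> K' * m3 (\<xi> - \<delta>)" using K'0 m3_nonneg by simp
  have q2: "0 \<le> L * m3 p" using L0 m3_nonneg by simp
  have xb: "\<bar>\<xi>\<bar> \<le> R0" using inner_dist_bound[OF n1, of y x0] y(2) unfolding \<xi>_def by linarith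
  have xsq: "\<xi>\<^sup>2 \<le> R0\<^sup>2" using xb by (metis abs_le_square_iff abs_of_nonneg order_trans abs_ge_zero)
  show ?thesis
  proof (cases "\<xi> \<le> -\<tau>")
    case True
    have "K * \<tau> \<le> K * (-\<xi>)" using K0 True by (intro mult_left_mono) auto
    then have "A + Mg + \<bar>A\<bar> \<le> A - K * \<xi> - \<xi>\<^sup>2" using Kt xsq by simp
    then show ?thesis unfolding bar using q1 q2 gy by linarith
  next
    case nt: False
    show ?thesis
    proof (cases "2 * \<delta> < \<xi>")
      case True
      have "\<delta>^3 \<le> m3 (\<xi> - \<delta>)" by (rule m3_ge) (use True d in auto)
      then have "K' * \<delta>^3 \<le> K' * m3 (\<xi> - \<delta>)" using K'0 by (intro mult_left_mono)
      moreover have "K * \<xi> \<le> K * R0" using K0 xb by (intro mult_left_mono) auto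
      ultimately show ?thesis unfolding bar using K'd q2 gy xsq by linarith
    next
      case x2: False
      have "K * \<xi> \<le> K * (2 * \<delta>)" using K0 x2 by (intro mult_left_mono) auto
      then have Kx: "K * \<xi> \<le> 2 * K * \<delta>" by (simp add: mult_ac)
      show ?thesis
      proof (cases "dist y x0 < r")
        case True
        have gy2: "g y \<le> A - \<epsilon>/2" using gcl[OF y(1) True] A by simp
        have "A - \<epsilon>/2 \<le> A - K * \<xi> - \<xi>\<^sup>2"
        proof (cases "\<xi> \<le> 0")
          case True
          have "K * \<xi> \<le> 0" using K0 True by (simp add: mult_nonneg_nonpos)
          moreover have "\<bar>\<xi>\<bar> \<le> \<tau>" using True nt by simp
          then have "\<xi>\<^sup>2 \<le> \<tau>\<^sup>2" by (metis abs_le_square_iff abs_of_nonneg order_trans abs_ge_zero)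
          moreover have "\<tau>\<^sup>2 \<le> \<tau>" using tau by (simp add: power2_eq_square mult_le_cancel_left1)
          ultimately show ?thesis using tau by linarith
        next
          case False
          have "2 * K * \<delta> \<le> 2 * K * (\<epsilon> / (8 * K + 1))" using K0 d by (intro mult_left_mono) auto
          also have "\<dots> \<le> \<epsilon> / 4" using K0 ep by (simp add: field_simps)
          finally have k: "2 * K * \<delta> \<le> \<epsilon> / 4" .
          have "\<xi>\<^sup>2 \<le> (2 * \<delta>)\<^sup>2" using False x2 by (intro power_mono) auto
          also have "(2 * \<delta>)\<^sup>2 = 4 * \<delta> * \<delta>" by (simp add: power2_eq_square)
          also have "4 * \<delta> * \<delta> \<le> 4 * \<delta> * 1" using d by (intro mult_left_mono) auto
          finally have "\<xi>\<^sup>2 \<le> \<epsilon> / 4" using d by linarith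
          then show ?thesis using Kx k by linarith
        qed
        then show ?thesis unfolding bar using q1 q2 gy2 by linarith
      next
        case False
        have "r \<le> norm (y - x0)" using False by (simp add: dist_norm)
        then have "r\<^sup>2 \<le> norm (y - x0)^2" using r0 by (intro power_mono) auto
        then have "\<mu> * r\<^sup>2 \<le> \<mu> * norm (y - x0)^2" using mu0 by (intro mult_left_mono) auto
        then have "\<mu> * r\<^sup>2 / 8 \<le> p" unfolding p_def c0 using nt tau by (simp add: field_simps)
        then have "(\<mu> * r\<^sup>2 / 8)^3 \<le> m3 p" by (intro m3_ge) (use p00 in auto)
        then have "L * (\<mu> * r\<^sup>2 / 8)^3 \<le> L * m3 p" using L0 by (intro mult_left_mono)
        then show ?thesis unfolding bar using Lp q1 gy xsq Kx by linarith
      qed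
    qed
  qed
qed



lemma pow_q:
  fixes t s :: real
  assumes "0 < t"
  shows "t\<^sup>2 / t powr (1 + 2 * s) = t powr (1 - 2 * s)"
proof -
  have "t powr (1 - 2 * s) = t powr (2 - (1 + 2 * s))" by (simp add: algebra_simps)
  also have "\<dots> = t powr 2 / t powr (1 + 2 * s)" by (rule powr_diff)
  also have "t powr 2 = t\<^sup>2" using assms by (simp only: powr_numeral less_imp_le)
  finally show ?thesis by simp
qed

lemma bar_second_diff:
  fixes \<Omega> :: "'a::euclidean_space set"
  assumes n1: "norm \<nu> = 1" and le: "\<forall>y\<in>closure \<Omega>. \<nu> \<bullet> (y - x0) \<le> 0"
    and Bz: "\<And>w c. c \<in> closure \<Omega> \<Longrightarrow> dist w c < \<delta> \<Longrightarrow> \<nu> \<bullet> (w - x0) + \<mu> * norm (w - x0)^2 - c0 \<le> 0"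
    and xh: "xh \<in> closure \<Omega>" and t: "0 < t" "t < \<delta>"
  shows "bar \<nu> x0 A K K' L \<delta> \<mu> c0 (xh + t *\<^sub>R \<nu>) + bar \<nu> x0 A K K' L \<delta> \<mu> c0 (xh - t *\<^sub>R \<nu>)
         - 2 * bar \<nu> x0 A K K' L \<delta> \<mu> c0 xh = -2 * t\<^sup>2"
proof -
  define \<xi> where "\<xi> = \<nu> \<bullet> (xh - x0)"
  have x0: "\<xi> \<le> 0" using le xh unfolding \<xi>_def by blast
  have nn: "\<nu> \<bullet> \<nu> = 1" using n1 by (simp add: power2_norm_eq_inner[symmetric])
  have e1: "\<nu> \<bullet> (xh + t *\<^sub>R \<nu> - x0) = \<xi> + t" unfolding \<xi>_def using nn
    by (simp add: inner_diff_right inner_add_right)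
  have e2: "\<nu> \<bullet> (xh - t *\<^sub>R \<nu> - x0) = \<xi> - t" unfolding \<xi>_def using nn
    by (simp add: inner_diff_right inner_add_right)
  have d1: "dist (xh + t *\<^sub>R \<nu>) xh < \<delta>" "dist (xh - t *\<^sub>R \<nu>) xh < \<delta>" "dist xh xh < \<delta>"
    using n1 t by (auto simp: dist_norm)
  have z1: "m3 (\<nu> \<bullet> (w - x0) + \<mu> * norm (w - x0)^2 - c0) = 0" if "dist w xh < \<delta>" for w
    by (rule m3_zero[OF Bz[OF xh that]])
  have z2: "m3 (\<xi> + t - \<delta>) = 0" "m3 (\<xi> - t - \<delta>) = 0" "m3 (\<xi> - \<delta>) = 0"
    using x0 t by (auto intro: m3_zero)
  have b1: "bar \<nu> x0 A K K' L \<delta> \<mu> c0 (xh + t *\<^sub>R \<nu>) = A - K * (\<xi> + t) - (\<xi> + t)\<^sup>2"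
    unfolding bar_eq z1[OF d1(1)] unfolding e1 using z2 by simp
  have b2: "bar \<nu> x0 A K K' L \<delta> \<mu> c0 (xh - t *\<^sub>R \<nu>) = A - K * (\<xi> - t) - (\<xi> - t)\<^sup>2"
    unfolding bar_eq z1[OF d1(2)] unfolding e2 using z2 by simp
  have b3: "bar \<nu> x0 A K K' L \<delta> \<mu> c0 xh = A - K * \<xi> - \<xi>\<^sup>2"
    unfolding bar_eq z1[OF d1(3)] unfolding \<xi>_def[symmetric] using z2 by simp
  show ?thesis unfolding b1 b2 b3
    by (simp add: power2_eq_square algebra_simps)
qed

lemma E_neg_from_sd:
  fixes \<Omega> :: "'a::euclidean_space set" and s \<delta> B :: real
  assumes C2: "C2_on UNIV \<phi> \<phi>' H" and s: "0 < s" "s < 1" and d: "0 < \<delta>" and B0: "0 \<le> B"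
    and s1: "max (1/2) (1 - 2 * \<delta>\<^sup>2 / (8 * B + 1)) < s"
    and far: "\<And>w. \<bar>ext_g \<Omega> g v w - v xh\<bar> \<le> 2 * B"
    and n1: "norm \<nu> = 1"
    and sd: "\<And>t. 0 < t \<Longrightarrow> t < \<delta> \<Longrightarrow> \<phi> (xh + t *\<^sub>R \<nu>) + \<phi> (xh - t *\<^sub>R \<nu>) - 2 * \<phi> xh = -2 * t\<^sup>2"
  shows "0 < E_delta s \<Omega> g v \<phi> xh \<delta>"
proof -
  have P: "((\<lambda>t. -2 * t powr (1 - 2 * s)) has_integral -2 * (\<delta> powr (2 - 2 * s) / (2 - 2 * s))) {0<..<\<delta>}"
    by (rule has_integral_mult_right[OF near_powr_integral[OF s d]])
  have "((\<lambda>t. (\<phi> (xh + t *\<^sub>R \<nu>) + \<phi> (xh - t *\<^sub>R \<nu>) - 2 * \<phi> xh) / t powr (1 + 2 * s))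
          has_integral -2 * (\<delta> powr (2 - 2 * s) / (2 - 2 * s))) {0<..<\<delta>}"
  proof (rule has_integral_eq[OF _ P])
    fix t assume t: "t \<in> {0<..<\<delta>}"
    then have "(\<phi> (xh + t *\<^sub>R \<nu>) + \<phi> (xh - t *\<^sub>R \<nu>) - 2 * \<phi> xh) / t powr (1 + 2 * s)
               = -2 * (t\<^sup>2 / t powr (1 + 2 * s))" using sd[of t] by simp
    also have "\<dots> = -2 * t powr (1 - 2 * s)" using t by (simp add: pow_q)
    finally show "-2 * t powr (1 - 2 * s) = (\<phi> (xh + t *\<^sub>R \<nu>) + \<phi> (xh - t *\<^sub>R \<nu>) - 2 * \<phi> xh) / t powr (1 + 2 * s)"
      by simp
  qed
  then have near: "integral {0<..<\<delta>} (\<lambda>t. (\<phi> (xh + t *\<^sub>R \<nu>) + \<phi> (xh - t *\<^sub>R \<nu>) - 2 * \<phi> xh) / t powr (1 + 2 * s))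
      = -2 * (\<delta> powr (2 - 2 * s) / (2 - 2 * s))" by (rule integral_unique)
  have F: "\<bar>integral {t. \<delta> \<le> \<bar>t\<bar>} (\<lambda>t. (ext_g \<Omega> g v (xh + t *\<^sub>R \<nu>) - v xh) / \<bar>t\<bar> powr (1 + 2 * s))\<bar>
     \<le> (2 * B) * (\<delta> powr (-2 * s) / s)"
    by (rule far_bound[OF s(1) d]) (rule far)
  have c: "c_frac s > 0" by (rule c_frac_pos[OF s])
  have "E_z s \<Omega> g v \<phi> xh \<delta> \<nu> \<le> c_frac s * (-2 * (\<delta> powr (2 - 2 * s) / (2 - 2 * s)) + 2 * B * (\<delta> powr (-2 * s) / s))"
    unfolding E_z_def near distrib_left[symmetric]
    by (rule mult_left_mono) (use F c in auto)
  also have "\<dots> < 0"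
  proof (rule mult_pos_neg[OF c])
    show "-2 * (\<delta> powr (2 - 2 * s) / (2 - 2 * s)) + 2 * B * (\<delta> powr (-2 * s) / s) < 0"
      using bracket_neg[of 2 \<delta> B s] d B0 s1 s by simp
  qed
  finally have Ez: "E_z s \<Omega> g v \<phi> xh \<delta> \<nu> < 0" .
  have "(INF z\<in>sphere 0 1. E_z s \<Omega> g v \<phi> xh \<delta> z) \<le> E_z s \<Omega> g v \<phi> xh \<delta> \<nu>"
    by (rule cINF_lower[OF E_bdd_below[OF C2 s d far]]) (use n1 in simp)
  then show ?thesis unfolding E_delta_def using Ez by linarith
qed



lemma boundary_case:
  fixes \<Omega> :: "'a::euclidean_space set" and g :: "'a \<Rightarrow> real" and u :: "real \<Rightarrow> 'a \<Rightarrow> real"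
  assumes opn: "open \<Omega>" and sc: "strictly_convex \<Omega>" and bd: "bounded \<Omega>"
    and gcont: "continuous_on (- \<Omega>) g" and gb: "\<And>y. y \<notin> \<Omega> \<Longrightarrow> \<bar>g y\<bar> \<le> Mg"
    and M: "\<forall>s\<in>{0<..<1}. \<forall>x. \<bar>u s x\<bar> \<le> M"
    and visc: "\<forall>s\<in>{0<..<1}. nonlocal_visc_sub s \<Omega> g (u s)"
    and x0: "x0 \<in> frontier \<Omega>"
  shows "upper_relaxed_limit u x0 \<le> g x0"
proof (rule field_le_epsilon)
  fix \<epsilon>' :: real assume \<epsilon>'0: "0 < \<epsilon>'"
  define \<epsilon> where "\<epsilon> = \<epsilon>' / 2"
  have ep: "0 < \<epsilon>" unfolding \<epsilon>_def using \<epsilon>'0 by simp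
  have cv: "convex \<Omega>" by (rule sc_convex[OF sc])
  obtain \<nu> where n1: "norm \<nu> = 1" and lt: "\<forall>y\<in>\<Omega>. \<nu> \<bullet> (y - x0) < 0"
    and le: "\<forall>y\<in>closure \<Omega>. \<nu> \<bullet> (y - x0) \<le> 0"
    using normal_exists[OF opn cv x0] by blast
  have x0c: "x0 \<in> closure \<Omega>" and x0n: "x0 \<notin> \<Omega>" using x0 opn by (auto simp: frontier_def interior_open)
  obtain D where Db: "\<forall>w\<in>closure \<Omega>. dist w x0 \<le> D"
    using bounded_any_center[of "closure \<Omega>" x0] bounded_closure[OF bd] by (auto simp: dist_commute)
  have D0: "0 \<le> D" using Db x0c by force
  define R0 where "R0 = D + 2"
  have R0p: "0 < R0" unfolding R0_def using D0 by simp
  have "x0 \<in> - \<Omega>" using x0n by simp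
  then obtain r1 where r1: "r1 > 0" "\<forall>y\<in>- \<Omega>. dist y x0 < r1 \<longrightarrow> dist (g y) (g x0) < \<epsilon>/2"
    using gcont ep unfolding continuous_on_iff by (meson half_gt_zero)
  define r where "r = min r1 1"
  have r0: "0 < r" "r \<le> 1" unfolding r_def using r1 by auto
  have gcl: "g y \<le> g x0 + \<epsilon>/2" if "y \<notin> \<Omega>" "dist y x0 < r" for y
  proof -
    have "dist (g y) (g x0) < \<epsilon>/2" using r1(2) that unfolding r_def by auto
    then show ?thesis unfolding dist_real_def abs_less_iff by linarith
  qed
  obtain \<tau>0 where \<tau>0: "\<tau>0 > 0" "\<forall>w\<in>closure \<Omega>. r/4 \<le> dist w x0 \<longrightarrow> \<nu> \<bullet> (w - x0) \<le> -\<tau>0"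
    using sc_gap[OF sc bd n1 lt le x0c, of "r/4"] r0 by auto
  define \<mu> where "\<mu> = \<tau>0 / (4 * R0\<^sup>2)"
  have mu0: "0 < \<mu>" unfolding \<mu>_def using \<tau>0 R0p by simp
  define c0 where "c0 = 3 * \<mu> * r\<^sup>2 / 4"
  have c00: "0 \<le> c0" unfolding c0_def using mu0 by simp
  define \<tau> where "\<tau> = min (\<mu> * r\<^sup>2 / 8) (min 1 (\<epsilon>/2))"
  have tau: "0 < \<tau>" "\<tau> \<le> 1" "\<tau> \<le> \<epsilon>/2" "\<tau> \<le> \<mu> * r\<^sup>2 / 8" unfolding \<tau>_def using mu0 r0 ep by auto
  define A where "A = g x0 + \<epsilon>"
  have Mg0: "0 \<le> Mg" using gb[OF x0n] by linarith
  define K where "K = (Mg + \<bar>A\<bar> + R0\<^sup>2) / \<tau>"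
  have K0: "0 \<le> K" unfolding K_def using tau Mg0 by simp
  define \<delta> where "\<delta> = min (min 1 (r/4)) (min (min (3 * \<mu> * r\<^sup>2 / 16) (3 * \<tau>0 / 4)) (min (\<epsilon> / (8 * K + 1)) (\<epsilon> / 16)))"
  have d: "0 < \<delta>" "\<delta> \<le> 1" "\<delta> \<le> r/4" "\<delta> \<le> 3 * \<mu> * r\<^sup>2 / 16" "\<delta> \<le> 3 * \<tau>0 / 4"
    "\<delta> \<le> \<epsilon> / (8 * K + 1)" "\<delta> \<le> \<epsilon> / 16"
  proof -
    have p: "0 < 3 * \<mu> * r\<^sup>2 / 16" "0 < 3 * \<tau>0 / 4" "0 < \<epsilon> / (8 * K + 1)" "0 < \<epsilon> / 16" "0 < r/4"
      using r0 mu0 \<tau>0 ep K0 by auto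
    show "0 < \<delta>" "\<delta> \<le> 1" "\<delta> \<le> r/4" "\<delta> \<le> 3 * \<mu> * r\<^sup>2 / 16" "\<delta> \<le> 3 * \<tau>0 / 4"
      "\<delta> \<le> \<epsilon> / (8 * K + 1)" "\<delta> \<le> \<epsilon> / 16"
      unfolding \<delta>_def using p by (simp_all only: min_less_iff_conj min_le_iff_disj) auto
  qed
  define K' where "K' = (Mg + \<bar>A\<bar> + K * R0 + R0\<^sup>2) / \<delta>^3"
  define L where "L = (Mg + \<bar>A\<bar> + 2 * K * \<delta> + R0\<^sup>2) / (\<mu> * r\<^sup>2 / 8)^3"
  define \<phi> where "\<phi> = bar \<nu> x0 A K K' L \<delta> \<mu> c0"
  obtain \<phi>' H where C2: "C2_on UNIV \<phi> \<phi>' H"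
    using bar_C2[of \<nu> x0 A K K' L \<delta> \<mu> c0] unfolding C2ex_def \<phi>_def by blast
  have Bz: "\<nu> \<bullet> (w - x0) + \<mu> * norm (w - x0)^2 - c0 \<le> 0" if "c \<in> closure \<Omega>" "dist w c < \<delta>" for w c
    by (rule Bzero[OF n1 le \<tau>0(2) Db R0_def \<mu>_def c0_def d(2,3,4,5) \<tau>0(1) r0(1) that])
  have ext: "g y \<le> \<phi> y" if "y \<notin> \<Omega>" "dist y x0 \<le> R0" for y
    unfolding \<phi>_def
    by (rule bar_ext[where g=g and \<Omega>=\<Omega> and \<epsilon>=\<epsilon> and r=r and Mg=Mg, OF n1 A_def ep gcl gb that tau K_def d(1,2,6,7) K'_def c0_def mu0 r0(1) L_def])
  define B where "B = max M Mg"
  have "(1/2::real) \<in> {0<..<1}" by simp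
  then have "\<bar>u (1/2) x0\<bar> \<le> M" using M by blast
  then have B0: "0 \<le> B" unfolding B_def by linarith
  define s1 where "s1 = max (1/2) (1 - 2 * \<delta>\<^sup>2 / (8 * B + 1))"
  have s1: "1/2 \<le> s1" "s1 < 1" unfolding s1_def using d(1) B0 by auto
  have main: "u s y \<le> \<phi> y" if s: "s1 < s" "s < 1" and y: "y \<in> cball x0 R0" for s y
  proof -
    have s01: "0 < s" "s < 1" using s s1 by auto
    have vs: "nonlocal_visc_sub s \<Omega> g (u s)" using visc s01 by auto
    have uscs: "usc (u s)" using vs unfolding nonlocal_visc_sub_def by blast
    define f where "f = (\<lambda>w. u s w - \<phi> w)"
    have uscf: "usc f" unfolding f_def by (rule usc_diff_cont[OF uscs C2_continuous[OF C2]])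
    have "compact (\<phi> ` cball x0 R0)"
      by (intro compact_continuous_image continuous_on_subset[OF C2_continuous[OF C2]]) auto
    then obtain C\<phi> where C\<phi>: "\<forall>z\<in>\<phi> ` cball x0 R0. norm z \<le> C\<phi>"
      using compact_imp_bounded bounded_iff by metis
    have ub: "\<bar>u s w\<bar> \<le> B" for w
    proof -
      have "s \<in> {0<..<1}" using s01 by simp
      then have "\<bar>u s w\<bar> \<le> M" using M by blast
      then show ?thesis unfolding B_def by linarith
    qed
    obtain xh where xh: "xh \<in> cball x0 R0" "\<forall>w\<in>cball x0 R0. f w \<le> f xh"
    proof -
      have "\<exists>x\<in>cball x0 R0. \<forall>w\<in>cball x0 R0. f w \<le> f x"
      proof (rule usc_argmax[OF uscf, of "cball x0 R0" "B + C\<phi>"])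
        fix w assume "w \<in> cball x0 R0"
        then have "\<bar>\<phi> w\<bar> \<le> C\<phi>" using C\<phi> by auto
        then show "f w \<le> B + C\<phi>" unfolding f_def using ub[of w] by linarith
      qed (use R0p in auto)
      then show ?thesis using that by blast
    qed
    have fxh: "f xh \<le> 0"
    proof (cases "xh \<in> closure \<Omega>")
      case True
      have mb: "\<forall>w\<in>ball xh \<delta>. u s w - \<phi> w \<le> u s xh - \<phi> xh"
      proof
        fix w assume w: "w \<in> ball xh \<delta>"
        have "dist w x0 \<le> dist w xh + dist xh x0" by (rule dist_triangle)
        moreover have "dist xh x0 \<le> D" using Db True by blast
        ultimately have "dist w x0 \<le> R0" using w d(2) unfolding R0_def by (auto simp: dist_commute)
        then have "w \<in> cball x0 R0" by (simp add: dist_commute)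
        then show "u s w - \<phi> w \<le> u s xh - \<phi> xh" using xh(2) unfolding f_def by blast
      qed
      define v where "v = ext_g \<Omega> g (u s)"
      have gb': "\<bar>g w\<bar> \<le> B" if "w \<notin> \<Omega>" for w using gb[OF that] unfolding B_def by linarith
      have vb: "\<bar>v w\<bar> \<le> B" for w unfolding v_def by (rule ext_g_bound) (use ub gb' in auto)
      have far: "\<bar>ext_g \<Omega> g v w - v xh\<bar> \<le> 2 * B" for w
      proof -
        have "\<bar>ext_g \<Omega> g v w\<bar> \<le> B" by (rule ext_g_bound) (use vb gb' in auto)
        then show ?thesis using vb[of xh] by linarith
      qed
      have sd: "\<phi> (xh + t *\<^sub>R \<nu>) + \<phi> (xh - t *\<^sub>R \<nu>) - 2 * \<phi> xh = -2 * t\<^sup>2" if "0 < t" "t < \<delta>" for t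
        unfolding \<phi>_def by (rule bar_second_diff[OF n1 le Bz True that])
      have Epos: "0 < E_delta s \<Omega> g v \<phi> xh \<delta>"
        by (rule E_neg_from_sd[OF C2 s01 d(1) B0 _ far n1 sd]) (use s s1_def in auto)
      show ?thesis
      proof (cases "xh \<in> \<Omega>")
        case True
        then have "E_delta s \<Omega> g v \<phi> xh \<delta> \<le> 0"
          using vs C2 mb d(1) unfolding nonlocal_visc_sub_def v_def by blast
        then show ?thesis using Epos by linarith
      next
        case False
        then have xf: "xh \<in> frontier \<Omega>" using \<open>xh \<in> closure \<Omega>\<close> opn by (simp add: frontier_def interior_open)
        then have "min (E_delta s \<Omega> g v \<phi> xh \<delta>) (u s xh - g xh) \<le> 0"
          using vs C2 mb d(1) unfolding nonlocal_visc_sub_def v_def by blast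
        then have "u s xh \<le> g xh" using Epos by linarith
        moreover have "g xh \<le> \<phi> xh" by (rule ext) (use False xh(1) in \<open>auto simp: dist_commute\<close>)
        ultimately show ?thesis unfolding f_def by linarith
      qed
    next
      case False
      then have "u s xh \<le> g xh" using vs unfolding nonlocal_visc_sub_def by blast
      moreover have "xh \<notin> \<Omega>" using False closure_subset by blast
      then have "g xh \<le> \<phi> xh" by (intro ext) (use xh(1) in \<open>auto simp: dist_commute\<close>)
      ultimately show ?thesis unfolding f_def by linarith
    qed
    then show ?thesis using xh(2) y unfolding f_def by force
  qed
  have \<phi>x0: "\<phi> x0 = A"
    unfolding \<phi>_def bar_eq using d(1) c00 by (simp add: m3_zero)
  have "continuous (at x0) \<phi>" using C2_continuous[OF C2] by (simp add: continuous_on_eq_continuous_at)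
  then obtain r3 where r3: "r3 > 0" "\<forall>y. dist y x0 < r3 \<longrightarrow> dist (\<phi> y) (\<phi> x0) < \<epsilon>"
    using ep unfolding continuous_at_eps_delta by blast
  define r4 where "r4 = min r3 (min (1 - s1) R0)"
  have r4: "0 < r4" unfolding r4_def using r3 s1 R0p by auto
  have "upper_relaxed_limit u x0 \<le> A + \<epsilon>"
  proof (rule url_le[OF M r4])
    fix s y assume a: "dist y x0 < r4" "1 - r4 < s" "0 < s" "s < 1"
    have "s1 < s" using a(2) unfolding r4_def by linarith
    moreover have "y \<in> cball x0 R0" using a(1) unfolding r4_def by (simp add: dist_commute)
    ultimately have "u s y \<le> \<phi> y" using main a(4) by blast
    moreover have "dist (\<phi> y) (\<phi> x0) < \<epsilon>" using r3(2) a(1) unfolding r4_def by auto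
    ultimately show "u s y \<le> A + \<epsilon>" using \<phi>x0 by (simp add: dist_real_def)
  qed
  then show "upper_relaxed_limit u x0 \<le> g x0 + \<epsilon>'" unfolding A_def \<epsilon>_def by simp
qed


theorem lemma2p9:
  fixes \<Omega> :: "'a::euclidean_space set"
    and g :: "'a \<Rightarrow> real"
    and u :: "real \<Rightarrow> 'a \<Rightarrow> real"
  assumes "C2_domain \<Omega>" and "strictly_convex \<Omega>" and "bounded \<Omega>"
    and "continuous_on (- \<Omega>) g" and "bounded (g ` (- \<Omega>))"
    and "\<exists>M. \<forall>s\<in>{0<..<1}. \<forall>x. \<bar>u s x\<bar> \<le> M"
    and "\<forall>s\<in>{0<..<1}. nonlocal_visc_sub s \<Omega> g (u s)"
  shows "local_visc_sub \<Omega> g (upper_relaxed_limit u)"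
proof -
  have opn: "open \<Omega>" using assms(1) unfolding C2_domain_def by blast
  obtain M where M: "\<forall>s\<in>{0<..<1}. \<forall>x. \<bar>u s x\<bar> \<le> M" using assms(6) by blast
  obtain Mg where Mg0: "\<forall>y\<in>g ` (- \<Omega>). norm y \<le> Mg" using assms(5) bounded_iff by metis
  have gb: "\<bar>g y\<bar> \<le> Mg" if "y \<notin> \<Omega>" for y using Mg0 that by auto
  show ?thesis
    unfolding local_visc_sub_def
  proof (intro conjI ballI allI impI)
    fix x assume "x \<in> frontier \<Omega>"
    then show "upper_relaxed_limit u x \<le> g x"
      using boundary_case[OF opn assms(2,3,4) gb M assms(7)] by blast
  next
    fix \<psi> \<psi>' H x
    assume C2: "C2_on UNIV \<psi> \<psi>' H" and x: "x \<in> \<Omega>"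
      and sm: "\<exists>r>0. \<forall>y\<in>ball x r \<inter> closure \<Omega>. y \<noteq> x \<longrightarrow>
                 upper_relaxed_limit u y - \<psi> y < upper_relaxed_limit u x - \<psi> x"
    have ne: "sphere (0::'a) 1 \<noteq> {}"
    proof -
      obtain b :: 'a where "b \<in> Basis" using nonempty_Basis by blast
      then have "b \<in> sphere 0 1" by simp
      then show ?thesis by blast
    qed
    show "0 \<le> (INF z\<in>sphere 0 1. (H x) z \<bullet> z)"
      by (rule cINF_greatest[OF ne]) (rule interior_case[OF opn M gb assms(7) C2 x sm])
  qed
qed

end
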